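(* In the setting described in the context, apply to the phase space variables $(P,Q)=(p_1,p_2,p_3,q_1,q_2,q_3)\in(\mathbb{R}^2)^6$ of the charged three-body problem the following successive changes of variables: (1) $P=\mathcal A^{-T}Y$, $Q=\mathcal AX$ with $Y=(G,Z,W)$, $X=(g,z,w)$; (2) set $G=g=0$ and rotate: $\tilde z=R(\theta(t))^Tz$, $\tilde Z=R(\theta(t))^TZ$, $\tilde w=R(\theta(t))^Tw$, $\tilde W=R(\theta(t))^TW$; (3) $\hat z=\tilde z/r(t)$, $\hat Z=r(t)\tilde Z-\dot r(t)\tilde z$, $\hat w=\tilde w/r(t)$, $\hat W=r(t)\tilde W-\dot r(t)\tilde w$; (4) replace the time $t$ by the true anomaly $\theta$ as independent variable; (5) $\bar z=\sigma\hat z$, $\bar Z=\sigma^{-1}\hat Z$, $\bar w=\sigma\hat w$, $\bar W=\sigma^{-1}\hat W$. Then the elliptic triangle solution $Q(t)=(r(t)R(\theta(t))a_1,r(t)R(\theta(t))a_2,r(t)R(\theta(t))a_3)^T$, $P(t)=M\dot Q(t)$, is transformed to the solution, with $G\equiv g\equiv0$, of the Hamiltonian system with Hamiltonian $H$ given by $$(\bar Z(\theta),\bar W(\theta))=(0,\sigma,0,0),\qquad (\bar z(\theta),\bar w(\theta))=(\sigma,0,0,0).$$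
   Context: Setting: masses $m_1,m_2,m_3>0$ with $m_1+m_2+m_3=1$, charges $e_i\in\mathbb{R}$, $\delta_{ij}=1-\frac{e_ie_j}{m_im_j}>0$, with $\delta_{ij}^{1/3}+\delta_{jk}^{1/3}>\delta_{ki}^{1/3}$ for cyclic $(i,j,k)$. $M={\rm diag}(m_1I_2,m_2I_2,m_3I_2)$. Let $\theta_1,\theta_2,\theta_3$ be the inner angles of a non-collinear central configuration of the charged problem (so $\sin\theta_1:\sin\theta_2:\sin\theta_3=\delta_{23}^{1/3}:\delta_{31}^{1/3}:\delta_{12}^{1/3}$), $\alpha=\sqrt{m_2m_3\sin^2\theta_1+m_3m_1\sin^2\theta_2+m_1m_2\sin^2\theta_3}$, and $a_1=\frac1\alpha(m_2\cos\theta_2\sin\theta_3-m_3\sin\theta_2\cos\theta_3,\ (m_2+m_3)\sin\theta_2\sin\theta_3)^T$, $a_2=\frac1\alpha(-m_1\cos\theta_2\sin\theta_3-m_3\sin(\theta_2+\theta_3),\ -m_1\sin\theta_2\sin\theta_3)^T$, $a_3=\frac1\alpha(m_2\sin(\theta_2+\theta_3)+m_1\sin\theta_2\cos\theta_3,\ -m_1\sin\theta_2\sin\theta_3)^T$ (this configuration has center of mass $0$ and $\sum m_i|a_i|^2=1$). $J=\begin{pmatrix}0&-1\\1&0\end{pmatrix}$, $R(\varphi)$ rotation by $\varphi$. $A_i=(a_i,Ja_i)$ ($2\times2$), $\rho_i=\sqrt{m_1m_2m_3}/m_i$, $B_1=\frac{\rho_1\sin\theta_1}{\alpha}I$, $B_2=-\frac{\rho_2\sin\theta_2}{\alpha}R(\theta_3)$,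 $B_3=-\frac{\rho_3\sin\theta_3}{\alpha}R(-\theta_2)$, and $\mathcal A$ is the $6\times6$ matrix with block rows $(I,A_i,B_i)$, $i=1,2,3$ (it satisfies $\mathcal A^TM\mathcal A=I$). $\mu=\sum_{i<j}m_im_j\delta_{ij}/|a_i-a_j|$. $z(t)=r(t)(\cos\theta(t),\sin\theta(t))$ is an elliptic Kepler orbit of $\ddot z=-\mu z/|z|^3$ with eccentricity $e\in[0,1)$ and parameter $p>0$, so that in terms of the true anomaly $r(\theta)=p/(1+e\cos\theta)$; $\sigma=(\mu p)^{1/4}$. $U(z,w)=\sum_{i<j}\frac{m_im_j\delta_{ij}}{|(A_i-A_j)z+(B_i-B_j)w|}$ for $z,w\in\mathbb{R}^2$, and $$H(\theta,\bar Z,\bar W,\bar z,\bar w)=\tfrac12(|\bar Z|^2+|\bar W|^2)+(\bar z\cdot J\bar Z+\bar w\cdot J\bar W)+\frac{p-r(\theta)}{2p}(|\bar z|^2+|\bar w|^2)-\frac{r(\theta)}{(\mu p)^{1/4}}U(\bar z,\bar w).$$ *)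

theory Defs
  imports "HOL-Analysis.Analysis"
begin

text \<open>Planar vectors are elements of real^2 (components 1 and 2); 2x2 matrices are
  real^2^2, built row by row.  Bodies are indexed by the naturals 1, 2, 3.\<close>

definition vec2 :: "real \<Rightarrow> real \<Rightarrow> real^2" where
  "vec2 x y = vector [x, y]"

definition mat2 :: "real \<Rightarrow> real \<Rightarrow> real \<Rightarrow> real \<Rightarrow> real^2^2" where
  "mat2 a b c d = vector [vector [a, b], vector [c, d]]"

definition rot :: "real \<Rightarrow> real^2^2" where
  "rot phi = mat2 (cos phi) (- sin phi) (sin phi) (cos phi)"

definition Jm :: "real^2^2" where
  "Jm = mat2 0 (-1) 1 0"

definition cols2 :: "real^2 \<Rightarrow> real^2 \<Rightarrow> real^2^2" where
  "cols2 u v = mat2 (u$1) (v$1) (u$2) (v$2)"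

definition delta :: "(nat \<Rightarrow> real) \<Rightarrow> (nat \<Rightarrow> real) \<Rightarrow> nat \<Rightarrow> nat \<Rightarrow> real" where
  "delta m q i j = 1 - q i * q j / (m i * m j)"

definition alpha :: "(nat \<Rightarrow> real) \<Rightarrow> real \<Rightarrow> real \<Rightarrow> real \<Rightarrow> real" where
  "alpha m t1 t2 t3 = sqrt (m 2 * m 3 * (sin t1)^2 + m 3 * m 1 * (sin t2)^2 + m 1 * m 2 * (sin t3)^2)"

definition avec :: "(nat \<Rightarrow> real) \<Rightarrow> real \<Rightarrow> real \<Rightarrow> real \<Rightarrow> nat \<Rightarrow> real^2" where
  "avec m t1 t2 t3 i =
     (1 / alpha m t1 t2 t3) *\<^sub>R
     (if i = 1 then vec2 (m 2 * cos t2 * sin t3 - m 3 * sin t2 * cos t3) ((m 2 + m 3) * sin t2 * sin t3)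
      else if i = 2 then vec2 (- m 1 * cos t2 * sin t3 - m 3 * sin (t2 + t3)) (- m 1 * sin t2 * sin t3)
      else vec2 (m 2 * sin (t2 + t3) + m 1 * sin t2 * cos t3) (- m 1 * sin t2 * sin t3))"

definition Amat :: "(nat \<Rightarrow> real) \<Rightarrow> real \<Rightarrow> real \<Rightarrow> real \<Rightarrow> nat \<Rightarrow> real^2^2" where
  "Amat m t1 t2 t3 i = cols2 (avec m t1 t2 t3 i) (Jm *v avec m t1 t2 t3 i)"

definition rho :: "(nat \<Rightarrow> real) \<Rightarrow> nat \<Rightarrow> real" where
  "rho m i = sqrt (m 1 * m 2 * m 3) / m i"

definition Bmat :: "(nat \<Rightarrow> real) \<Rightarrow> real \<Rightarrow> real \<Rightarrow> real \<Rightarrow> nat \<Rightarrow> real^2^2" where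
  "Bmat m t1 t2 t3 i =
     (if i = 1 then (rho m 1 * sin t1 / alpha m t1 t2 t3) *\<^sub>R mat 1
      else if i = 2 then (- (rho m 2 * sin t2 / alpha m t1 t2 t3)) *\<^sub>R rot t3
      else (- (rho m 3 * sin t3 / alpha m t1 t2 t3)) *\<^sub>R rot (- t2))"

text \<open>Block row i of the product calA * X, for X = (g, z, w).\<close>
definition calA_act :: "(nat \<Rightarrow> real) \<Rightarrow> real \<Rightarrow> real \<Rightarrow> real \<Rightarrow> real^2 \<Rightarrow> real^2 \<Rightarrow> real^2 \<Rightarrow> nat \<Rightarrow> real^2" where
  "calA_act m t1 t2 t3 g z w i = g + Amat m t1 t2 t3 i *v z + Bmat m t1 t2 t3 i *v w"

text \<open>calA^T * P for P = (p_1, p_2, p_3); P = calA^(-T) Y is equivalent to Y = calA^T P.\<close>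
definition calAT_act :: "(nat \<Rightarrow> real) \<Rightarrow> real \<Rightarrow> real \<Rightarrow> real \<Rightarrow> (nat \<Rightarrow> real^2) \<Rightarrow> (real^2) \<times> (real^2) \<times> (real^2)" where
  "calAT_act m t1 t2 t3 P =
     ((\<Sum>i\<in>{1,2,3}. P i),
      (\<Sum>i\<in>{1,2,3}. transpose (Amat m t1 t2 t3 i) *v P i),
      (\<Sum>i\<in>{1,2,3}. transpose (Bmat m t1 t2 t3 i) *v P i))"

definition mu :: "(nat \<Rightarrow> real) \<Rightarrow> (nat \<Rightarrow> real) \<Rightarrow> real \<Rightarrow> real \<Rightarrow> real \<Rightarrow> real" where
  "mu m q t1 t2 t3 =
     (\<Sum>(i,j)\<in>{(1,2),(1,3),(2,3)}. m i * m j * delta m q i j / norm (avec m t1 t2 t3 i - avec m t1 t2 t3 j))"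

definition Upot :: "(nat \<Rightarrow> real) \<Rightarrow> (nat \<Rightarrow> real) \<Rightarrow> real \<Rightarrow> real \<Rightarrow> real \<Rightarrow> real^2 \<Rightarrow> real^2 \<Rightarrow> real" where
  "Upot m q t1 t2 t3 z w =
     (\<Sum>(i,j)\<in>{(1,2),(1,3),(2,3)}. m i * m j * delta m q i j /
        norm ((Amat m t1 t2 t3 i - Amat m t1 t2 t3 j) *v z + (Bmat m t1 t2 t3 i - Bmat m t1 t2 t3 j) *v w))"

definition rtrue :: "real \<Rightarrow> real \<Rightarrow> real \<Rightarrow> real" where
  "rtrue p e th = p / (1 + e * cos th)"

definition sigma :: "(nat \<Rightarrow> real) \<Rightarrow> (nat \<Rightarrow> real) \<Rightarrow> real \<Rightarrow> real \<Rightarrow> real \<Rightarrow> real \<Rightarrow> real" where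
  "sigma m q t1 t2 t3 p = (mu m q t1 t2 t3 * p) powr (1/4)"

definition Ham :: "(nat \<Rightarrow> real) \<Rightarrow> (nat \<Rightarrow> real) \<Rightarrow> real \<Rightarrow> real \<Rightarrow> real \<Rightarrow> real \<Rightarrow> real \<Rightarrow>
                   real \<Rightarrow> real^2 \<Rightarrow> real^2 \<Rightarrow> real^2 \<Rightarrow> real^2 \<Rightarrow> real" where
  "Ham m q t1 t2 t3 p e th Zb Wb zb wb =
     (1/2) * ((norm Zb)^2 + (norm Wb)^2) + (zb \<bullet> (Jm *v Zb) + wb \<bullet> (Jm *v Wb))
     + (p - rtrue p e th) / (2 * p) * ((norm zb)^2 + (norm wb)^2)
     - rtrue p e th / sigma m q t1 t2 t3 p * Upot m q t1 t2 t3 zb wb"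

text \<open>A curve (Zb, Wb, zb, wb) (independent variable theta) solves Hamilton's equations
  for a time-dependent Hamiltonian H(theta, Z, W, z, w), where z, w are the positions and
  Z, W the conjugate momenta:  z' = dH/dZ, w' = dH/dW, Z' = - dH/dz, W' = - dH/dw.\<close>
definition hamiltonian_solution ::
  "(real \<Rightarrow> real^2 \<Rightarrow> real^2 \<Rightarrow> real^2 \<Rightarrow> real^2 \<Rightarrow> real) \<Rightarrow>
   (real \<Rightarrow> real^2) \<Rightarrow> (real \<Rightarrow> real^2) \<Rightarrow> (real \<Rightarrow> real^2) \<Rightarrow> (real \<Rightarrow> real^2) \<Rightarrow> bool" where
  "hamiltonian_solution H Zc Wc zc wc \<longleftrightarrow>
     (\<forall>th. \<exists>dZ dW dz dw.
        (Zc has_vector_derivative dZ) (at th) \<and> (Wc has_vector_derivative dW) (at th) \<and>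
        (zc has_vector_derivative dz) (at th) \<and> (wc has_vector_derivative dw) (at th) \<and>
        ((\<lambda>Z. H th Z (Wc th) (zc th) (wc th)) has_derivative (\<lambda>v. dz \<bullet> v)) (at (Zc th)) \<and>
        ((\<lambda>W. H th (Zc th) W (zc th) (wc th)) has_derivative (\<lambda>v. dw \<bullet> v)) (at (Wc th)) \<and>
        ((\<lambda>z. H th (Zc th) (Wc th) z (wc th)) has_derivative (\<lambda>v. - (dZ \<bullet> v))) (at (zc th)) \<and>
        ((\<lambda>w. H th (Zc th) (Wc th) (zc th) w) has_derivative (\<lambda>v. - (dW \<bullet> v))) (at (wc th)))"

definition Qtri :: "(nat \<Rightarrow> real) \<Rightarrow> real \<Rightarrow> real \<Rightarrow> real \<Rightarrow> (real \<Rightarrow> real) \<Rightarrow> (real \<Rightarrow> real) \<Rightarrow> nat \<Rightarrow> real \<Rightarrow> real^2" where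
  "Qtri m t1 t2 t3 r ang i t = r t *\<^sub>R (rot (ang t) *v avec m t1 t2 t3 i)"

definition Ptri :: "(nat \<Rightarrow> real) \<Rightarrow> real \<Rightarrow> real \<Rightarrow> real \<Rightarrow> (real \<Rightarrow> real) \<Rightarrow> (real \<Rightarrow> real) \<Rightarrow> nat \<Rightarrow> real \<Rightarrow> real^2" where
  "Ptri m t1 t2 t3 r ang i t = m i *\<^sub>R vector_derivative (Qtri m t1 t2 t3 r ang i) (at t)"

end

theory Submission
  imports Defs
begin


lemma conf_ids:
  fixes m1 m2 m3 s1 s2 s3 c2 c3 A K :: real
  assumes A2: "A^2 = m2*m3* s1^2 + m3*m1* s2^2 + m1*m2* s3^2" and Apos: "A > 0"
    and K2: "K^2 = m1*m2*m3" and mp: "m1 > 0" "m2 > 0" "m3 > 0" and ms: "m1+m2+m3 = 1"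
    and s1: "s1 = s2*c3+c2* s3" and p2: "c2^2+s2^2 = 1" and p3: "c3^2+s3^2 = 1"
  defines "ax1 \<equiv> (m2*c2* s3 - m3* s2*c3)/A" and "ay1 \<equiv> (m2+m3)* s2* s3/A"
    and "ax2 \<equiv> (-m1*c2* s3 - m3* s1)/A" and "ay2 \<equiv> -m1* s2* s3/A"
    and "ax3 \<equiv> (m2* s1 + m1* s2*c3)/A" and "ay3 \<equiv> -m1* s2* s3/A"
    and "bx1 \<equiv> K/m1* s1/A" and "by1 \<equiv> 0"
    and "bx2 \<equiv> -(K/m2* s2/A)*c3" and "by2 \<equiv> -(K/m2* s2/A)* s3"
    and "bx3 \<equiv> -(K/m3* s3/A)*c2" and "by3 \<equiv> (K/m3* s3/A)* s2"
  shows "m1*ax1+m2*ax2+m3*ax3 = 0" "m1*ay1+m2*ay2+m3*ay3 = 0"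
    "m1*(ax1^2+ay1^2)+m2*(ax2^2+ay2^2)+m3*(ax3^2+ay3^2) = 1"
    "m1*bx1+m2*bx2+m3*bx3 = 0" "m1*by1+m2*by2+m3*by3 = 0"
    "m1*(bx1^2+by1^2)+m2*(bx2^2+by2^2)+m3*(bx3^2+by3^2) = 1"
    "m1*(ax1*bx1+ay1*by1)+m2*(ax2*bx2+ay2*by2)+m3*(ax3*bx3+ay3*by3) = 0"
    "m1*(ax1*by1-ay1*bx1)+m2*(ax2*by2-ay2*bx2)+m3*(ax3*by3-ay3*bx3) = 0"
    "ax1 - ax2 = c2* s3/A" "ay1 - ay2 = s2* s3/A" "ax1 - ax3 = -(s2*c3)/A" "ay1 - ay3 = s2* s3/A"
    "ax2 - ax3 = -s1/A" "ay2 - ay3 = 0"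
proof -
  have A0: "A \<noteq> 0" using Apos by simp
  show "m1*ax1+m2*ax2+m3*ax3 = 0" unfolding ax1_def ax2_def ax3_def using A0
    by (simp add: field_simps; (simp add: algebra_simps)?)
  show "m1*ay1+m2*ay2+m3*ay3 = 0" unfolding ay1_def ay2_def ay3_def using A0
    by (simp add: field_simps; (simp add: algebra_simps)?)
  show "m1*(ax1^2+ay1^2)+m2*(ax2^2+ay2^2)+m3*(ax3^2+ay3^2) = 1"
  proof -
    have "m1*((m2*c2* s3 - m3* s2*c3)^2 + ((m2+m3)* s2* s3)^2) + m2*((-m1*c2* s3 - m3* s1)^2 + (-m1* s2* s3)^2)
       + m3*((m2* s1 + m1* s2*c3)^2 + (-m1* s2* s3)^2) = A^2"
      unfolding A2 using ms s1 p2 p3 by algebra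
    moreover have "m1*(ax1^2+ay1^2)+m2*(ax2^2+ay2^2)+m3*(ax3^2+ay3^2) = (m1*((m2*c2* s3 - m3* s2*c3)^2 + ((m2+m3)* s2* s3)^2) + m2*((-m1*c2* s3 - m3* s1)^2 + (-m1* s2* s3)^2)
       + m3*((m2* s1 + m1* s2*c3)^2 + (-m1* s2* s3)^2)) / A^2"
      unfolding ax1_def ax2_def ax3_def ay1_def ay2_def ay3_def using A0
      by (simp add: power_divide field_simps; algebra)
    ultimately show ?thesis using A0 by simp
  qed
  show "m1*bx1+m2*bx2+m3*bx3 = 0" unfolding bx1_def bx2_def bx3_def using A0 mp s1
    by (simp add: field_simps; (simp add: algebra_simps)?)
  show "m1*by1+m2*by2+m3*by3 = 0" unfolding by1_def by2_def by3_def using A0 mp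
    by (simp add: field_simps)
  show "m1*(bx1^2+by1^2)+m2*(bx2^2+by2^2)+m3*(bx3^2+by3^2) = 1"
  proof -
    have e: "m1*(bx1^2+by1^2)+m2*(bx2^2+by2^2)+m3*(bx3^2+by3^2) = K^2*(m2*m3* s1^2 + m3*m1* s2^2*(c3^2+s3^2) + m1*m2* s3^2*(c2^2+s2^2))/(m1*m2*m3*A^2)"
      unfolding bx1_def bx2_def bx3_def by1_def by2_def by3_def using A0 mp
      by (simp add: field_simps power_divide; algebra)
    have "K^2*(m2*m3* s1^2 + m3*m1* s2^2*(c3^2+s3^2) + m1*m2* s3^2*(c2^2+s2^2)) = m1*m2*m3*A^2"
      unfolding p2 p3 K2 A2 by simp
    then show ?thesis unfolding e using A0 mp by simp
  qed
  show "m1*(ax1*bx1+ay1*by1)+m2*(ax2*bx2+ay2*by2)+m3*(ax3*bx3+ay3*by3) = 0"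
    unfolding ax1_def ax2_def ax3_def ay1_def ay2_def ay3_def bx1_def bx2_def bx3_def by1_def by2_def by3_def
    using A0 mp by (simp add: field_simps; (simp add: algebra_simps)?)
  show "m1*(ax1*by1-ay1*bx1)+m2*(ax2*by2-ay2*bx2)+m3*(ax3*by3-ay3*bx3) = 0"
    unfolding ax1_def ax2_def ax3_def ay1_def ay2_def ay3_def bx1_def bx2_def bx3_def by1_def by2_def by3_def
    using A0 mp by (simp add: field_simps; (simp add: algebra_simps)?)
  show "ax1 - ax2 = c2* s3/A" unfolding ax1_def ax2_def using A0 ms s1 by (simp add: field_simps; algebra)
  show "ay1 - ay2 = s2* s3/A" unfolding ay1_def ay2_def using A0 ms s1 by (simp add: field_simps; algebra)
  show "ax1 - ax3 = -(s2*c3)/A" unfolding ax1_def ax3_def using A0 ms s1 by (simp add: field_simps; algebra)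
  show "ay1 - ay3 = s2* s3/A" unfolding ay1_def ay3_def using A0 ms s1 by (simp add: field_simps; algebra)
  show "ax2 - ax3 = -s1/A" unfolding ax2_def ax3_def using A0 ms s1 by (simp add: field_simps; algebra)
  show "ay2 - ay3 = 0" unfolding ay2_def ay3_def by simp
qed

lemma pair_id:
  fixes m1 m2 m3 x1 x2 x3 y1 y2 y3 :: real
  shows "m1*m2*((x1-x2)*(y1-y2)) + m1*m3*((x1-x3)*(y1-y3)) + m2*m3*((x2-x3)*(y2-y3)) =
    (m1+m2+m3)*(m1*x1*y1+m2*x2*y2+m3*x3*y3) - (m1*x1+m2*x2+m3*x3)*(m1*y1+m2*y2+m3*y3)"
  by algebra


lemma lin_unique:
  fixes m1 m2 m3 ax1 ax2 ax3 ay1 ay2 ay3 bx1 bx2 bx3 by1 by2 by3 g1 g2 z1 z2 w1 w2 k1 k2 :: real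
  assumes ms: "m1+m2+m3 = 1"
    and I: "m1*ax1+m2*ax2+m3*ax3 = 0" "m1*ay1+m2*ay2+m3*ay3 = 0"
    "m1*(ax1^2+ay1^2)+m2*(ax2^2+ay2^2)+m3*(ax3^2+ay3^2) = 1"
    "m1*bx1+m2*bx2+m3*bx3 = 0" "m1*by1+m2*by2+m3*by3 = 0"
    "m1*(bx1^2+by1^2)+m2*(bx2^2+by2^2)+m3*(bx3^2+by3^2) = 1"
    "m1*(ax1*bx1+ay1*by1)+m2*(ax2*bx2+ay2*by2)+m3*(ax3*bx3+ay3*by3) = 0"
    "m1*(ax1*by1-ay1*bx1)+m2*(ax2*by2-ay2*bx2)+m3*(ax3*by3-ay3*bx3) = 0"
    and E: "g1 + (ax1*z1 - ay1*z2) + (bx1*w1 - by1*w2) = ax1*k1 - ay1*k2"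
      "g2 + (ay1*z1 + ax1*z2) + (by1*w1 + bx1*w2) = ay1*k1 + ax1*k2"
      "g1 + (ax2*z1 - ay2*z2) + (bx2*w1 - by2*w2) = ax2*k1 - ay2*k2"
      "g2 + (ay2*z1 + ax2*z2) + (by2*w1 + bx2*w2) = ay2*k1 + ax2*k2"
      "g1 + (ax3*z1 - ay3*z2) + (bx3*w1 - by3*w2) = ax3*k1 - ay3*k2"
      "g2 + (ay3*z1 + ax3*z2) + (by3*w1 + bx3*w2) = ay3*k1 + ax3*k2"
  shows "g1 = 0" "g2 = 0" "z1 = k1" "z2 = k2" "w1 = 0" "w2 = 0"
proof -
  have L: "((g1 + (ax1*z1 - ay1*z2) + (bx1*w1 - by1*w2)) - (ax1*k1 - ay1*k2)) = 0 \<and> ((g2 + (ay1*z1 + ax1*z2) + (by1*w1 + bx1*w2)) - (ay1*k1 + ax1*k2)) = 0 \<and> ((g1 + (ax2*z1 - ay2*z2) + (bx2*w1 - by2*w2)) - (ax2*k1 - ay2*k2)) = 0 \<and> ((g2 + (ay2*z1 + ax2*z2) + (by2*w1 + bx2*w2)) - (ay2*k1 + ax2*k2)) = 0 \<and> ((g1 + (ax3*z1 - ay3*z2) + (bx3*w1 - by3*w2)) - (ax3*k1 - ay3*k2)) = 0 \<and> ((g2 + (ay3*z1 + ax3*z2) + (by3*w1 + bx3*w2)) - (ay3*k1 + ax3*k2)) = 0" using E by simp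
  have c_g1: "m1*((g1 + (ax1*z1 - ay1*z2) + (bx1*w1 - by1*w2)) - (ax1*k1 - ay1*k2)) + m2*((g1 + (ax2*z1 - ay2*z2) + (bx2*w1 - by2*w2)) - (ax2*k1 - ay2*k2)) + m3*((g1 + (ax3*z1 - ay3*z2) + (bx3*w1 - by3*w2)) - (ax3*k1 - ay3*k2)) = g1*(m1+m2+m3) + (z1-k1)*(m1*ax1+m2*ax2+m3*ax3) - (z2-k2)*(m1*ay1+m2*ay2+m3*ay3) + w1*(m1*bx1+m2*bx2+m3*bx3) - w2*(m1*by1+m2*by2+m3*by3)"
    by (simp add: algebra_simps power2_eq_square)
  have "g1 = 0" using c_g1 L ms I by simp
  then show "g1 = 0" by simp
  have c_g2: "m1*((g2 + (ay1*z1 + ax1*z2) + (by1*w1 + bx1*w2)) - (ay1*k1 + ax1*k2)) + m2*((g2 + (ay2*z1 + ax2*z2) + (by2*w1 + bx2*w2)) - (ay2*k1 + ax2*k2)) + m3*((g2 + (ay3*z1 + ax3*z2) + (by3*w1 + bx3*w2)) - (ay3*k1 + ax3*k2)) = g2*(m1+m2+m3) + (z1-k1)*(m1*ay1+m2*ay2+m3*ay3) + (z2-k2)*(m1*ax1+m2*ax2+m3*ax3) + w1*(m1*by1+m2*by2+m3*by3) + w2*(m1*bx1+m2*bx2+m3*bx3)"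
    by (simp add: algebra_simps power2_eq_square)
  have "g2 = 0" using c_g2 L ms I by simp
  then show "g2 = 0" by simp
  have c_z1: "(m1*ax1)*((g1 + (ax1*z1 - ay1*z2) + (bx1*w1 - by1*w2)) - (ax1*k1 - ay1*k2)) + (m1*ay1)*((g2 + (ay1*z1 + ax1*z2) + (by1*w1 + bx1*w2)) - (ay1*k1 + ax1*k2)) + (m2*ax2)*((g1 + (ax2*z1 - ay2*z2) + (bx2*w1 - by2*w2)) - (ax2*k1 - ay2*k2)) + (m2*ay2)*((g2 + (ay2*z1 + ax2*z2) + (by2*w1 + bx2*w2)) - (ay2*k1 + ax2*k2)) + (m3*ax3)*((g1 + (ax3*z1 - ay3*z2) + (bx3*w1 - by3*w2)) - (ax3*k1 - ay3*k2)) + (m3*ay3)*((g2 + (ay3*z1 + ax3*z2) + (by3*w1 + bx3*w2)) - (ay3*k1 + ax3*k2)) = g1*(m1*ax1+m2*ax2+m3*ax3) + g2*(m1*ay1+m2*ay2+m3*ay3) + (z1-k1)*(m1*(ax1^2+ay1^2)+m2*(ax2^2+ay2^2)+m3*(ax3^2+ay3^2)) + w1*(m1*(ax1*bx1+ay1*by1)+m2*(ax2*bx2+ay2*by2)+m3*(ax3*bx3+ay3*by3)) - w2*(m1*(ax1*by1-ay1*bx1)+m2*(ax2*by2-ay2*bx2)+m3*(ax3*by3-ay3*bx3))"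
    by (simp add: algebra_simps power2_eq_square)
  have "z1 - k1 = 0" using c_z1 L ms I by simp
  then show "z1 = k1" by simp
  have c_z2: "-(m1*ay1)*((g1 + (ax1*z1 - ay1*z2) + (bx1*w1 - by1*w2)) - (ax1*k1 - ay1*k2)) + (m1*ax1)*((g2 + (ay1*z1 + ax1*z2) + (by1*w1 + bx1*w2)) - (ay1*k1 + ax1*k2)) + -(m2*ay2)*((g1 + (ax2*z1 - ay2*z2) + (bx2*w1 - by2*w2)) - (ax2*k1 - ay2*k2)) + (m2*ax2)*((g2 + (ay2*z1 + ax2*z2) + (by2*w1 + bx2*w2)) - (ay2*k1 + ax2*k2)) + -(m3*ay3)*((g1 + (ax3*z1 - ay3*z2) + (bx3*w1 - by3*w2)) - (ax3*k1 - ay3*k2)) + (m3*ax3)*((g2 + (ay3*z1 + ax3*z2) + (by3*w1 + bx3*w2)) - (ay3*k1 + ax3*k2)) = - g1*(m1*ay1+m2*ay2+m3*ay3) + g2*(m1*ax1+m2*ax2+m3*ax3) + (z2-k2)*(m1*(ax1^2+ay1^2)+m2*(ax2^2+ay2^2)+m3*(ax3^2+ay3^2)) + w1*(m1*(ax1*by1-ay1*bx1)+m2*(ax2*by2-ay2*bx2)+m3*(ax3*by3-ay3*bx3)) + w2*(m1*(ax1*bx1+ay1*by1)+m2*(ax2*bx2+ay2*by2)+m3*(ax3*bx3+ay3*by3))"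
    by (simp add: algebra_simps power2_eq_square)
  have "z2 - k2 = 0" using c_z2 L ms I by simp
  then show "z2 = k2" by simp
  have c_w1: "(m1*bx1)*((g1 + (ax1*z1 - ay1*z2) + (bx1*w1 - by1*w2)) - (ax1*k1 - ay1*k2)) + (m1*by1)*((g2 + (ay1*z1 + ax1*z2) + (by1*w1 + bx1*w2)) - (ay1*k1 + ax1*k2)) + (m2*bx2)*((g1 + (ax2*z1 - ay2*z2) + (bx2*w1 - by2*w2)) - (ax2*k1 - ay2*k2)) + (m2*by2)*((g2 + (ay2*z1 + ax2*z2) + (by2*w1 + bx2*w2)) - (ay2*k1 + ax2*k2)) + (m3*bx3)*((g1 + (ax3*z1 - ay3*z2) + (bx3*w1 - by3*w2)) - (ax3*k1 - ay3*k2)) + (m3*by3)*((g2 + (ay3*z1 + ax3*z2) + (by3*w1 + bx3*w2)) - (ay3*k1 + ax3*k2)) = g1*(m1*bx1+m2*bx2+m3*bx3) + g2*(m1*by1+m2*by2+m3*by3) + (z1-k1)*(m1*(ax1*bx1+ay1*by1)+m2*(ax2*bx2+ay2*by2)+m3*(ax3*bx3+ay3*by3)) + (z2-k2)*(m1*(ax1*by1-ay1*bx1)+m2*(ax2*by2-ay2*bx2)+m3*(ax3*by3-ay3*bx3)) + w1*(m1*(bx1^2+by1^2)+m2*(bx2^2+by2^2)+m3*(bx3^2+by3^2))"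
    by (simp add: algebra_simps power2_eq_square)
  have "w1 = 0" using c_w1 L ms I by simp
  then show "w1 = 0" by simp
  have c_w2: "-(m1*by1)*((g1 + (ax1*z1 - ay1*z2) + (bx1*w1 - by1*w2)) - (ax1*k1 - ay1*k2)) + (m1*bx1)*((g2 + (ay1*z1 + ax1*z2) + (by1*w1 + bx1*w2)) - (ay1*k1 + ax1*k2)) + -(m2*by2)*((g1 + (ax2*z1 - ay2*z2) + (bx2*w1 - by2*w2)) - (ax2*k1 - ay2*k2)) + (m2*bx2)*((g2 + (ay2*z1 + ax2*z2) + (by2*w1 + bx2*w2)) - (ay2*k1 + ax2*k2)) + -(m3*by3)*((g1 + (ax3*z1 - ay3*z2) + (bx3*w1 - by3*w2)) - (ax3*k1 - ay3*k2)) + (m3*bx3)*((g2 + (ay3*z1 + ax3*z2) + (by3*w1 + bx3*w2)) - (ay3*k1 + ax3*k2)) = - g1*(m1*by1+m2*by2+m3*by3) + g2*(m1*bx1+m2*bx2+m3*bx3) - (z1-k1)*(m1*(ax1*by1-ay1*bx1)+m2*(ax2*by2-ay2*bx2)+m3*(ax3*by3-ay3*bx3)) + (z2-k2)*(m1*(ax1*bx1+ay1*by1)+m2*(ax2*bx2+ay2*by2)+m3*(ax3*bx3+ay3*by3)) + w2*(m1*(bx1^2+by1^2)+m2*(bx2^2+by2^2)+m3*(bx3^2+by3^2))"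
    by (simp add: algebra_simps power2_eq_square)
  have "w2 = 0" using c_w2 L ms I by simp
  then show "w2 = 0" by simp
qed


lemma vec2_nth[simp]: "vec2 a b $ 1 = a" "vec2 a b $ 2 = b"
  by (simp_all add: vec2_def)
lemma norm2: "norm (x::real^2) = sqrt ((x$1)^2 + (x$2)^2)"
  by (simp add: norm_vec_def L2_set_def sum_2)

lemma comp_deriv:
  fixes f :: "real \<Rightarrow> real^2"
  assumes "(f has_vector_derivative f') (at t)"
  shows "((\<lambda>t. f t $ k) has_real_derivative (f' $ k)) (at t)"
  using bounded_linear.has_vector_derivative[OF bounded_linear_vec_nth assms, of k]
  by (simp add: has_real_derivative_iff_has_vector_derivative)

lemma kepler_core:
  fixes zK zK' :: "real \<Rightarrow> real^2" and r r' ang :: "real \<Rightarrow> real" and mu0 p e :: real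
  assumes mu0: "mu0 > 0" and par: "p > 0" and ecc: "0 \<le> e" "e < 1"
   and kepler_polar: "\<And>t. zK t = r t *\<^sub>R vec2 (cos (ang t)) (sin (ang t))"
   and kepler_vel: "\<And>t. (zK has_vector_derivative zK' t) (at t)"
   and kepler_acc: "\<And>t. (zK' has_vector_derivative (- (mu0 / (norm (zK t))^3)) *\<^sub>R zK t) (at t)"
   and conic: "\<And>t. r t = p / (1 + e * cos (ang t))"
   and r_deriv: "\<And>t. (r has_real_derivative r' t) (at t)"
  shows "r t > 0" and "r t * r' t = zK t $1 * zK' t $1 + zK t $2 * zK' t $2"
   and "(zK t $1 * zK' t $2 - zK t $2 * zK' t $1)^2 = mu0 * p"
proof -
  have den: "1 + e * cos (ang t) > 0" for t
  proof -
    have "e * cos (ang t) \<ge> e * (-1)" using ecc by (intro mult_left_mono) auto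
    then show ?thesis using ecc by linarith
  qed
  have rpos: "r t > 0" for t using conic[of t] den[of t] par by simp
  then show "r t > 0" .
  define X where "X t = zK t $ 1" for t
  define Y where "Y t = zK t $ 2" for t
  define VX where "VX t = zK' t $ 1" for t
  define VY where "VY t = zK' t $ 2" for t
  have XY: "X t = r t * cos (ang t)" "Y t = r t * sin (ang t)" for t
    unfolding X_def Y_def by (simp_all add: kepler_polar)
  have r2: "(r t)^2 = (X t)^2 + (Y t)^2" for t
  proof -
    have "(X t)^2 + (Y t)^2 = (r t)^2 * ((cos (ang t))^2 + (sin (ang t))^2)"
      unfolding XY by (simp only: power_mult_distrib distrib_left)
    then show ?thesis by simp
  qed
  have nrm: "norm (zK t) = r t" for t
    using r2[of t] rpos[of t] unfolding norm2 X_def Y_def by (simp add: real_sqrt_unique)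
  have rlin: "r t = p - e * X t" for t
  proof -
    have "r t * (1 + e * cos (ang t)) = p" using conic[of t] den[of t] by simp
    then show ?thesis unfolding XY by (simp add: algebra_simps)
  qed
  have dX: "(X has_real_derivative VX t) (at t)" "(Y has_real_derivative VY t) (at t)" for t
    unfolding X_def Y_def VX_def VY_def using comp_deriv[OF kepler_vel] by auto
  have dV: "(VX has_real_derivative (- (mu0 / (r t)^3)) * X t) (at t)"
    "(VY has_real_derivative (- (mu0 / (r t)^3)) * Y t) (at t)" for t
    unfolding X_def Y_def VX_def VY_def using comp_deriv[OF kepler_acc, where t=t] nrm[of t] by auto
  have r'eq: "r' t = - e * VX t" for t
  proof -
    have "((\<lambda>t. p - e * X t) has_real_derivative (0 - e * VX t)) (at t)"
      using DERIV_diff[OF DERIV_const[of p] DERIV_cmult[OF dX(1), of e]] by simp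
    moreover have "r = (\<lambda>t. p - e * X t)" using rlin by auto
    ultimately show ?thesis using r_deriv[of t] DERIV_unique by fastforce
  qed
  have rr': "r t * r' t = X t * VX t + Y t * VY t" for t
  proof -
    have "((\<lambda>t. (r t)^2) has_real_derivative (2 * r t * r' t)) (at t)"
      using DERIV_power[OF r_deriv, of 2 t] by (simp add: mult.commute mult.left_commute)
    moreover have "((\<lambda>t. (X t)^2 + (Y t)^2) has_real_derivative (2 * X t * VX t + 2 * Y t * VY t)) (at t)"
      using DERIV_add[OF DERIV_power[OF dX(1), of 2] DERIV_power[OF dX(2), of 2]] by (simp add: mult.commute mult.left_commute)
    moreover have "(\<lambda>t. (r t)^2) = (\<lambda>t. (X t)^2 + (Y t)^2)" using r2 by auto
    ultimately show ?thesis using DERIV_unique by fastforce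
  qed
  then show "r t * r' t = zK t $1 * zK' t $1 + zK t $2 * zK' t $2" unfolding X_def Y_def VX_def VY_def .
  have key: "r' t * r' t + e * mu0 * X t / (r t)^2 = (VX t)^2 + (VY t)^2 - mu0 / r t"
  proof -
    have d1: "((\<lambda>t. r t * (- e * VX t)) has_real_derivative
        (r' t * (- e * VX t) + (- e * ((- (mu0 / (r t)^3)) * X t)) * r t)) (at t)"
      by (rule DERIV_mult[OF r_deriv DERIV_cmult[OF dV(1)]])
    have d2: "((\<lambda>t. X t * VX t + Y t * VY t) has_real_derivative
        (VX t * VX t + (- (mu0 / (r t)^3) * X t) * X t + (VY t * VY t + (- (mu0 / (r t)^3) * Y t) * Y t))) (at t)"
      by (rule DERIV_add[OF DERIV_mult[OF dX(1) dV(1)] DERIV_mult[OF dX(2) dV(2)]])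
    have "(\<lambda>t. r t * (- e * VX t)) = (\<lambda>t. X t * VX t + Y t * VY t)"
      using rr' r'eq by (auto simp flip: r'eq)
    then have E: "r' t * (- e * VX t) + (- e * ((- (mu0 / (r t)^3)) * X t)) * r t =
       VX t * VX t + (- (mu0 / (r t)^3) * X t) * X t + (VY t * VY t + (- (mu0 / (r t)^3) * Y t) * Y t)"
      using d1 d2 DERIV_unique by fastforce
    have "(- (mu0 / (r t)^3) * X t) * X t + (- (mu0 / (r t)^3) * Y t) * Y t = - mu0 * ((X t)^2 + (Y t)^2) / (r t)^3"
      by (simp add: algebra_simps power2_eq_square diff_divide_distrib add_divide_distrib)
    also have "\<dots> = - mu0 / r t" unfolding r2[symmetric] using rpos[of t] by (simp add: power2_eq_square power3_eq_cube)
    finally have E2: "(- (mu0 / (r t)^3) * X t) * X t + (- (mu0 / (r t)^3) * Y t) * Y t = - mu0 / r t" .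
    have E3: "(- e * ((- (mu0 / (r t)^3)) * X t)) * r t = e * mu0 * X t / (r t)^2"
      using rpos[of t] by (simp add: power2_eq_square power3_eq_cube field_simps)
    show ?thesis using E E2 E3 r'eq[of t] by (simp add: power2_eq_square algebra_simps)
  qed
  show "(zK t $1 * zK' t $2 - zK t $2 * zK' t $1)^2 = mu0 * p"
  proof -
    define c where "c = X t * VY t - Y t * VX t"
    have lag: "(r t)^2 * ((VX t)^2 + (VY t)^2) = (r t * r' t)^2 + c^2"
      unfolding rr' c_def r2 by (simp add: algebra_simps power2_eq_square)
    have eX: "e * X t = p - r t" using rlin[of t] by simp
    have k2: "(r' t)^2 + mu0 * p / (r t)^2 = (VX t)^2 + (VY t)^2"
    proof -
      have "e * mu0 * X t / (r t)^2 = mu0 * p / (r t)^2 - mu0 / r t"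
        using rpos[of t] eX by (simp add: field_simps power2_eq_square; metis distrib_left mult.left_commute)
      then show ?thesis using key by (simp add: power2_eq_square)
    qed
    have "(r t)^2 * ((r' t)^2 + mu0 * p / (r t)^2) = (r t)^2 * (r' t)^2 + mu0 * p"
      using rpos[of t] by (simp add: field_simps)
    then have "c^2 = mu0 * p" using lag k2 by (simp add: power_mult_distrib)
    then show ?thesis unfolding c_def X_def Y_def VX_def VY_def .
  qed
qed



lemma angle_facts:
  fixes zK zK' :: "real \<Rightarrow> real^2" and r r' ang :: "real \<Rightarrow> real" and K R0 :: real
  assumes kepler_polar: "\<And>t. zK t = r t *\<^sub>R vec2 (cos (ang t)) (sin (ang t))"
   and kepler_vel: "\<And>t. (zK has_vector_derivative zK' t) (at t)"
   and r_deriv: "\<And>t. (r has_real_derivative r' t) (at t)"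
   and rpos: "\<And>t. r t > 0" and rmax: "\<And>t. r t \<le> R0"
   and cK: "\<And>t. (zK t $1 * zK' t $2 - zK t $2 * zK' t $1)^2 = K" and Kpos: "K > 0"
   and cont: "continuous_on UNIV ang" and mono: "strict_mono ang"
  shows "zK t $1 * zK' t $2 - zK t $2 * zK' t $1 = sqrt K" and "\<exists>t. ang t = vth"
proof -
  define X where "X t = zK t $ 1" for t
  define Y where "Y t = zK t $ 2" for t
  define VX where "VX t = zK' t $ 1" for t
  define VY where "VY t = zK' t $ 2" for t
  have XY: "X t = r t * cos (ang t)" "Y t = r t * sin (ang t)" for t
    unfolding X_def Y_def by (simp_all add: kepler_polar)
  have dX: "(X has_real_derivative VX t) (at t)" "(Y has_real_derivative VY t) (at t)" for t
    unfolding X_def Y_def VX_def VY_def using comp_deriv[OF kepler_vel] by auto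
  have dang: "(ang has_real_derivative (X t0 * VY t0 - Y t0 * VX t0) / (r t0)^2) (at t0)" for t0
  proof -
    define a0 where "a0 = ang t0"
    define f where "f t = cos a0 * (Y t / r t) - sin a0 * (X t / r t)" for t
    have fsin: "f t = sin (ang t - a0)" for t
      unfolding f_def XY using rpos[of t] by (simp add: sin_diff algebra_simps)
    have "isCont ang t0" using cont by (simp add: continuous_on_eq_continuous_at)
    then have "\<exists>d>0. \<forall>x\<in>UNIV. x \<noteq> t0 \<and> dist x t0 < d \<longrightarrow> dist (ang x) (ang t0) < pi/2"
      unfolding isCont_def tendsto_iff
    proof -
      assume h: "\<forall>e>0. \<forall>\<^sub>F x in at t0. dist (ang x) (ang t0) < e"
      have "\<forall>\<^sub>F x in at t0. dist (ang x) (ang t0) < pi/2" using h[rule_format, of "pi/2"] pi_gt_zero by linarith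
      then show "\<exists>d>0. \<forall>x\<in>UNIV. x \<noteq> t0 \<and> dist x t0 < d \<longrightarrow> dist (ang x) (ang t0) < pi/2"
        unfolding eventually_at by auto
    qed
    then obtain d where d0: "d > 0" and dd: "\<And>t. t \<noteq> t0 \<Longrightarrow> dist t t0 < d \<Longrightarrow> dist (ang t) (ang t0) < pi/2"
      by blast
    have d: "d > 0" "\<And>t. dist t t0 < d \<Longrightarrow> dist (ang t) (ang t0) < pi/2"
    proof -
      show "d > 0" by (rule d0)
      fix t assume "dist t t0 < d"
      then show "dist (ang t) (ang t0) < pi/2" using dd[of t] pi_gt_zero by (cases "t = t0") auto
    qed
    have loc: "a0 + arcsin (f t) = ang t" if "t \<in> ball t0 d" for t
    proof -
      have "\<bar>ang t - a0\<bar> < pi/2" using d(2)[of t] that unfolding a0_def by (simp add: dist_real_def dist_commute)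
      then have "arcsin (sin (ang t - a0)) = ang t - a0" by (intro arcsin_sin) linarith+
      then show ?thesis unfolding fsin by simp
    qed
    define f' where "f' = cos a0 * ((VY t0 * r t0 - Y t0 * r' t0) / (r t0 * r t0)) - sin a0 * ((VX t0 * r t0 - X t0 * r' t0) / (r t0 * r t0))"
    have df: "(f has_real_derivative f') (at t0)"
    proof -
      have r0: "r t0 \<noteq> 0" using rpos[of t0] by simp
      show ?thesis unfolding f_def[abs_def] f'_def
        by (rule DERIV_diff[OF DERIV_cmult[OF DERIV_divide[OF dX(2) r_deriv r0]] DERIV_cmult[OF DERIV_divide[OF dX(1) r_deriv r0]]])
    qed
    have f0: "f t0 = 0" using fsin[of t0] unfolding a0_def by simp
    have darc: "(arcsin has_real_derivative 1) (at (f t0))"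
      using DERIV_arcsin[of "f t0"] unfolding f0 by simp
    have "((\<lambda>t. a0 + arcsin (f t)) has_real_derivative (0 + 1 * f')) (at t0)"
      by (intro DERIV_add DERIV_const DERIV_chain2[OF darc df])
    then have "((\<lambda>t. a0 + arcsin (f t)) has_real_derivative f') (at t0)" by simp
    then have "(ang has_real_derivative f') (at t0)"
      by (rule has_field_derivative_transform_within_open[of _ _ _ "ball t0 d"]) (use d loc in auto)
    moreover have "f' = (X t0 * VY t0 - Y t0 * VX t0) / (r t0)^2"
      unfolding f'_def XY[of t0] a0_def using rpos[of t0]
      by (simp add: field_simps power2_eq_square; simp add: algebra_simps; metis (no_types) sin_cos_squared_add mult.commute distrib_left mult_1_right)
    ultimately show ?thesis by simp
  qed
  have cnn: "X t0 * VY t0 - Y t0 * VX t0 \<ge> 0" for t0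
  proof (rule ccontr)
    assume "\<not> ?thesis"
    then have "(X t0 * VY t0 - Y t0 * VX t0) / (r t0)^2 < 0" using rpos[of t0] by (simp add: divide_neg_pos)
    from DERIV_neg_dec_right[OF dang[of t0] this] obtain d where "d > 0" "\<And>h. h > 0 \<Longrightarrow> h < d \<Longrightarrow> ang t0 > ang (t0 + h)" by blast
    then have "ang t0 > ang (t0 + d/2)" by simp
    moreover have "ang t0 < ang (t0 + d/2)" using mono \<open>d > 0\<close> by (simp add: strict_mono_less)
    ultimately show False by simp
  qed
  have cval: "X t * VY t - Y t * VX t = sqrt K" for t
  proof -
    have "(X t * VY t - Y t * VX t)^2 = K" using cK[of t] unfolding X_def Y_def VX_def VY_def .
    then show ?thesis using cnn[of t] by (metis real_sqrt_unique)
  qed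
  then show "zK t $1 * zK' t $2 - zK t $2 * zK' t $1 = sqrt K" unfolding X_def Y_def VX_def VY_def .
  have R0pos: "R0 > 0" using rpos[of 0] rmax[of 0] by simp
  define k where "k = sqrt K / R0^2"
  have kpos: "k > 0" unfolding k_def using Kpos R0pos by simp
  have dang2: "(ang has_real_derivative sqrt K / (r t)^2) (at t)" for t using dang[of t] cval[of t] by simp
  have ge: "sqrt K / (r t)^2 \<ge> k" for t
    unfolding k_def using Kpos R0pos rpos[of t] rmax[of t]
    by (intro divide_left_mono power_mono mult_pos_pos) auto
  have grow: "ang b - k * b \<ge> ang a - k * a" if "a \<le> b" for a b
  proof -
    have "\<exists>y. ((\<lambda>t. ang t - k * t) has_real_derivative y) (at x) \<and> y \<ge> 0" for x
      using ge[of x] by (intro exI[of _ "sqrt K / (r x)^2 - k * 1"] conjI derivative_intros dang2) auto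
    then show ?thesis using DERIV_nonneg_imp_nondecreasing[OF that, of "\<lambda>t. ang t - k * t"] by blast
  qed
  have contI: "continuous_on {a..b} ang" for a b using cont by (rule continuous_on_subset) auto
  show "\<exists>t. ang t = vth"
  proof (cases "vth \<ge> ang 0")
    case True
    define b where "b = (vth - ang 0) / k"
    have b0: "b \<ge> 0" unfolding b_def using True kpos by simp
    have "ang b \<ge> vth" using grow[OF b0] kpos unfolding b_def by simp
    then show ?thesis using IVT'[of ang 0 vth b, OF True _ b0 contI] by blast
  next
    case False
    define a where "a = (vth - ang 0) / k"
    have a0: "a \<le> 0" unfolding a_def using False kpos by (simp add: divide_nonpos_pos)
    have "ang a \<le> vth" using grow[OF a0] kpos unfolding a_def by simp
    then show ?thesis using IVT'[of ang a vth 0, OF _ _ a0 contI] False by auto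
  qed
qed


lemma vec2_eq_iff: "(x::real^2) = y \<longleftrightarrow> x$1 = y$1 \<and> x$2 = y$2"
  by (simp add: vec_eq_iff forall_2)
lemma mat2_mv[simp]: "(mat2 a b c d  *v x) $ 1 = a  *  x$1 + b  *  x$2"
  "(mat2 a b c d  *v x) $ 2 = c  *  x$1 + d  *  x$2"
  by (simp_all add: mat2_def matrix_vector_mult_def sum_2)
lemma transpose_mat2[simp]: "transpose (mat2 a b c d) = mat2 a c b d"
  by (simp add: mat2_def transpose_def vec_eq_iff forall_2)
lemma mat2_diff: "mat2 a b c d - mat2 a' b' c' d' = mat2 (a-a') (b-b') (c-c') (d-d')"
  by (simp add: mat2_def vec_eq_iff forall_2)
lemma mat2_scale: "k  *\<^sub>R mat2 a b c d = mat2 (k * a) (k * b) (k * c) (k * d)"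
  by (simp add: mat2_def vec_eq_iff forall_2)
lemma mat1_2: "(mat 1 :: real^2^2) = mat2 1 0 0 1"
  by (simp add: mat2_def vec_eq_iff forall_2 mat_def)
lemma inner2: "(x::real^2) \<bullet> y = x$1  *  y$1 + x$2  *  y$2"
  by (simp add: inner_vec_def sum_2)
definition bX :: "(nat \<Rightarrow> real) \<Rightarrow> real \<Rightarrow> real \<Rightarrow> real \<Rightarrow> nat \<Rightarrow> real" where
  "bX m t1 t2 t3 i = (if i = 1 then rho m 1  *  sin t1 / alpha m t1 t2 t3
     else if i = 2 then - (rho m 2  *  sin t2 / alpha m t1 t2 t3)  *  cos t3
     else - (rho m 3  *  sin t3 / alpha m t1 t2 t3)  *  cos t2)"
definition bY :: "(nat \<Rightarrow> real) \<Rightarrow> real \<Rightarrow> real \<Rightarrow> real \<Rightarrow> nat \<Rightarrow> real" where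
  "bY m t1 t2 t3 i = (if i = 1 then 0
     else if i = 2 then - (rho m 2  *  sin t2 / alpha m t1 t2 t3)  *  sin t3
     else (rho m 3  *  sin t3 / alpha m t1 t2 t3)  *  sin t2)"

lemma Amat_mat2: "Amat m t1 t2 t3 i = mat2 (avec m t1 t2 t3 i $ 1) (- (avec m t1 t2 t3 i $ 2)) (avec m t1 t2 t3 i $ 2) (avec m t1 t2 t3 i $ 1)"
  by (simp add: Amat_def cols2_def Jm_def)

lemma Bmat_mat2: "Bmat m t1 t2 t3 i = mat2 (bX m t1 t2 t3 i) (- bY m t1 t2 t3 i) (bY m t1 t2 t3 i) (bX m t1 t2 t3 i)"
  by (simp add: Bmat_def bX_def bY_def mat1_2 rot_def mat2_scale)

lemma avec_comps:
  assumes "t1 + t2 + t3 = pi"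
  shows "avec m t1 t2 t3 1 $ 1 = (m 2 * cos t2 * sin t3 - m 3 * sin t2 * cos t3)/alpha m t1 t2 t3"
    "avec m t1 t2 t3 1 $ 2 = (m 2+m 3) * sin t2 * sin t3/alpha m t1 t2 t3"
    "avec m t1 t2 t3 2 $ 1 = (-m 1 * cos t2 * sin t3 - m 3 * sin t1)/alpha m t1 t2 t3"
    "avec m t1 t2 t3 2 $ 2 = -m 1 * sin t2 * sin t3/alpha m t1 t2 t3"
    "avec m t1 t2 t3 3 $ 1 = (m 2 * sin t1 + m 1 * sin t2 * cos t3)/alpha m t1 t2 t3"
    "avec m t1 t2 t3 3 $ 2 = -m 1 * sin t2 * sin t3/alpha m t1 t2 t3"
proof -
  have "sin (t2 + t3) = sin t1"
  proof -
    have "t2 + t3 = pi - t1" using assms by simp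
    then show ?thesis by simp
  qed
  then show "avec m t1 t2 t3 1 $ 1 = (m 2 * cos t2 * sin t3 - m 3 * sin t2 * cos t3)/alpha m t1 t2 t3"
    "avec m t1 t2 t3 1 $ 2 = (m 2+m 3) * sin t2 * sin t3/alpha m t1 t2 t3"
    "avec m t1 t2 t3 2 $ 1 = (-m 1 * cos t2 * sin t3 - m 3 * sin t1)/alpha m t1 t2 t3"
    "avec m t1 t2 t3 2 $ 2 = -m 1 * sin t2 * sin t3/alpha m t1 t2 t3"
    "avec m t1 t2 t3 3 $ 1 = (m 2 * sin t1 + m 1 * sin t2 * cos t3)/alpha m t1 t2 t3"
    "avec m t1 t2 t3 3 $ 2 = -m 1 * sin t2 * sin t3/alpha m t1 t2 t3"
    by (simp_all add: avec_def)
qed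

lemma config:
  fixes m :: "nat \<Rightarrow> real"
  assumes mp: "m 1 > 0" "m 2 > 0" "m 3 > 0" and ms: "m 1 + m 2 + m 3 = 1"
    and ang: "t1 > 0" "t2 > 0" "t3 > 0" "t1 + t2 + t3 = pi"
  defines "ax \<equiv> \<lambda>i. avec m t1 t2 t3 i $ 1" and "ay \<equiv> \<lambda>i. avec m t1 t2 t3 i $ 2"
    and "bx \<equiv> bX m t1 t2 t3" and "by \<equiv> bY m t1 t2 t3" and "A \<equiv> alpha m t1 t2 t3"
  shows "A > 0"
    "m 1 * ax 1+m 2 * ax 2+m 3 * ax 3 = 0" "m 1 * ay 1+m 2 * ay 2+m 3 * ay 3 = 0"
    "m 1 * (ax 1^2+ay 1^2)+m 2 * (ax 2^2+ay 2^2)+m 3 * (ax 3^2+ay 3^2) = 1"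
    "m 1 * bx 1+m 2 * bx 2+m 3 * bx 3 = 0" "m 1 * by 1+m 2 * by 2+m 3 * by 3 = 0"
    "m 1 * (bx 1^2+by 1^2)+m 2 * (bx 2^2+by 2^2)+m 3 * (bx 3^2+by 3^2) = 1"
    "m 1 * (ax 1 * bx 1+ay 1 * by 1)+m 2 * (ax 2 * bx 2+ay 2 * by 2)+m 3 * (ax 3 * bx 3+ay 3 * by 3) = 0"
    "m 1 * (ax 1 * by 1-ay 1 * bx 1)+m 2 * (ax 2 * by 2-ay 2 * bx 2)+m 3 * (ax 3 * by 3-ay 3 * bx 3) = 0"
    "ax 1 - ax 2 = cos t2 * sin t3/A" "ay 1 - ay 2 = sin t2 * sin t3/A"
    "ax 1 - ax 3 = -(sin t2 * cos t3)/A" "ay 1 - ay 3 = sin t2 * sin t3/A"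
    "ax 2 - ax 3 = -sin t1/A" "ay 2 - ay 3 = 0"
proof -
  have tl: "t1 < pi" "t2 < pi" "t3 < pi" using ang by linarith+
  have sp: "sin t1 > 0" "sin t2 > 0" "sin t3 > 0" using ang tl by (simp_all add: sin_gt_zero)
  have s1: "sin t1 = sin t2  *  cos t3 + cos t2  *  sin t3"
  proof -
    have "t1 = pi - (t2 + t3)" using ang by simp
    then show ?thesis by (simp add: sin_add)
  qed
  have Q: "m 2 * m 3 * (sin t1)^2 + m 3 * m 1 * (sin t2)^2 + m 1 * m 2 * (sin t3)^2 > 0"
    using mp sp by (intro add_pos_pos mult_pos_pos) auto
  have A2: "A^2 = m 2 * m 3 * (sin t1)^2 + m 3 * m 1 * (sin t2)^2 + m 1 * m 2 * (sin t3)^2"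
    unfolding A_def alpha_def using Q by simp
  have Apos: "A > 0" unfolding A_def alpha_def using Q by simp
  then show "A > 0" .
  have K2: "(sqrt (m 1 * m 2 * m 3))^2 = m 1 * m 2 * m 3" using mp by simp
  note C = conf_ids[of A "m 2" "m 3" "sin t1" "m 1" "sin t2" "sin t3" "sqrt (m 1 * m 2 * m 3)" "cos t3" "cos t2", OF A2 Apos K2 mp ms s1
     sin_cos_squared_add2 sin_cos_squared_add2]
  have E: "ax 1 = (m 2 * cos t2 * sin t3 - m 3 * sin t2 * cos t3)/A"
    "ay 1 = (m 2+m 3) * sin t2 * sin t3/A"
    "ax 2 = (-m 1 * cos t2 * sin t3 - m 3 * sin t1)/A"
    "ay 2 = -m 1 * sin t2 * sin t3/A"
    "ax 3 = (m 2 * sin t1 + m 1 * sin t2 * cos t3)/A"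
    "ay 3 = -m 1 * sin t2 * sin t3/A"
    "bx 1 = sqrt (m 1 * m 2 * m 3)/m 1 * sin t1/A" "by 1 = 0"
    "bx 2 = -(sqrt (m 1 * m 2 * m 3)/m 2 * sin t2/A) * cos t3" "by 2 = -(sqrt (m 1 * m 2 * m 3)/m 2 * sin t2/A) * sin t3"
    "bx 3 = -(sqrt (m 1 * m 2 * m 3)/m 3 * sin t3/A) * cos t2" "by 3 = (sqrt (m 1 * m 2 * m 3)/m 3 * sin t3/A) * sin t2"
    unfolding ax_def ay_def bx_def by_def A_def using avec_comps[OF ang(4)]
    by (simp_all add: bX_def bY_def rho_def)
  show "m 1 * ax 1+m 2 * ax 2+m 3 * ax 3 = 0" "m 1 * ay 1+m 2 * ay 2+m 3 * ay 3 = 0"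
    "m 1 * (ax 1^2+ay 1^2)+m 2 * (ax 2^2+ay 2^2)+m 3 * (ax 3^2+ay 3^2) = 1"
    "m 1 * bx 1+m 2 * bx 2+m 3 * bx 3 = 0" "m 1 * by 1+m 2 * by 2+m 3 * by 3 = 0"
    "m 1 * (bx 1^2+by 1^2)+m 2 * (bx 2^2+by 2^2)+m 3 * (bx 3^2+by 3^2) = 1"
    "m 1 * (ax 1 * bx 1+ay 1 * by 1)+m 2 * (ax 2 * bx 2+ay 2 * by 2)+m 3 * (ax 3 * bx 3+ay 3 * by 3) = 0"
    "m 1 * (ax 1 * by 1-ay 1 * bx 1)+m 2 * (ax 2 * by 2-ay 2 * bx 2)+m 3 * (ax 3 * by 3-ay 3 * bx 3) = 0"
    "ax 1 - ax 2 = cos t2 * sin t3/A" "ay 1 - ay 2 = sin t2 * sin t3/A"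
    "ax 1 - ax 3 = -(sin t2 * cos t3)/A" "ay 1 - ay 3 = sin t2 * sin t3/A"
    "ax 2 - ax 3 = -sin t1/A" "ay 2 - ay 3 = 0"
    unfolding E by (fact C)+
qed


lemma term_deriv:
  fixes d w0 :: "real^2" and E :: "real^2^2" and c :: real
  assumes nz: "d + E *v w0 \<noteq> 0"
  shows "((\<lambda>w. c / norm (d + E *v w)) has_derivative
     (\<lambda>v. - c * ((d + E *v w0) \<bullet> (E *v v)) / (norm (d + E *v w0))^3)) (at w0)"
proof -
  define x where "x = d + E *v w0"
  have lin: "((\<lambda>w. d + E *v w) has_derivative (\<lambda>v. E *v v)) (at w0)"
    using bounded_linear.has_derivative[OF matrix_vector_mul_bounded_linear has_derivative_ident, of E]
    by (auto intro!: derivative_eq_intros)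
  have n: "(norm has_derivative (\<lambda>h. h \<bullet> sgn x)) (at x)"
    using has_derivative_norm nz unfolding x_def by blast
  have cn: "((\<lambda>w. norm (d + E *v w)) has_derivative (\<lambda>v. (E *v v) \<bullet> sgn x)) (at w0)"
    using has_derivative_compose[OF lin n[unfolded x_def]] unfolding x_def by simp
  have nz': "norm x \<noteq> 0" using nz unfolding x_def by simp
  have "((\<lambda>w. c / norm (d + E *v w)) has_derivative
     (\<lambda>v. - c * (x \<bullet> (E *v v)) / (norm x)^3)) (at w0)"
    apply (rule has_derivative_eq_rhs)
     apply (rule has_derivative_divide[OF has_derivative_const cn])
    using nz' apply (simp add: x_def)
    apply (rule ext)
    using nz' apply (simp add: x_def[symmetric] sgn_div_norm inner_commute field_simps power3_eq_cube)
    done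
  then show ?thesis unfolding x_def .
qed

lemma lin_mv: "((\<lambda>x. (M::real^2^2) *v x) has_derivative (\<lambda>v. M *v v)) F"
  by (rule bounded_linear_imp_has_derivative) simp



lemma inv_norm_deriv:
  fixes z0 :: "real^2"
  assumes "z0 \<noteq> 0"
  shows "((\<lambda>z. c / norm z) has_derivative (\<lambda>v. - c * (z0 \<bullet> v) / (norm z0)^3)) (at z0)"
  using term_deriv[of 0 "mat 1" z0 c] assms by simp

lemma ham_solution:
  fixes m q :: "nat \<Rightarrow> real" and t1 t2 t3 p e s mu0 :: real
  assumes spos: "s > 0" and s4: "mu0 * p = s^4" and par: "p > 0"
    and sg: "sigma m q t1 t2 t3 p = s"
    and Uz: "\<And>z. Upot m q t1 t2 t3 z 0 = mu0 / norm z"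
    and Uw: "((\<lambda>w. Upot m q t1 t2 t3 (vec2 s 0) w) has_derivative (\<lambda>v. 0)) (at 0)"
  shows "hamiltonian_solution (Ham m q t1 t2 t3 p e) (\<lambda>_. vec2 0 s) (\<lambda>_. 0) (\<lambda>_. vec2 s 0) (\<lambda>_. 0)"
  unfolding hamiltonian_solution_def
proof (intro allI exI[of _ 0] conjI has_vector_derivative_const)
  fix th
  define z0 where "z0 = (vec2 s 0 :: real^2)"
  define Z0 where "Z0 = (vec2 0 s :: real^2)"
  have z0nz: "z0 \<noteq> 0" using spos unfolding z0_def by (auto simp: vec_eq_iff forall_2)
  have nz0: "norm z0 = s" unfolding z0_def using spos by (simp add: norm_vec_def L2_set_def sum_2)
  show "((\<lambda>Z. Ham m q t1 t2 t3 p e th Z 0 (vec2 s 0) 0) has_derivative (\<lambda>v. 0 \<bullet> v)) (at (vec2 0 s))"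
    unfolding Ham_def power2_norm_eq_inner
    apply (rule has_derivative_eq_rhs)
     apply (rule derivative_eq_intros lin_mv has_derivative_ident has_derivative_const refl)+
    apply (rule ext)
    apply (simp add: inner2 Jm_def mat2_def[symmetric])
    done
  show "((\<lambda>W. Ham m q t1 t2 t3 p e th (vec2 0 s) W (vec2 s 0) 0) has_derivative (\<lambda>v. 0 \<bullet> v)) (at 0)"
    unfolding Ham_def power2_norm_eq_inner
    apply (rule has_derivative_eq_rhs)
     apply (rule derivative_eq_intros lin_mv has_derivative_ident has_derivative_const refl)+
    apply (rule ext)
    apply (simp add: inner2 Jm_def)
    done
  show "((\<lambda>w. Ham m q t1 t2 t3 p e th (vec2 0 s) 0 (vec2 s 0) w) has_derivative (\<lambda>v. - (0 \<bullet> v))) (at 0)"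
    unfolding Ham_def power2_norm_eq_inner
    apply (rule has_derivative_eq_rhs)
     apply (rule derivative_eq_intros lin_mv has_derivative_ident has_derivative_const refl Uw)+
    apply (rule ext)
    apply (simp add: inner2 Jm_def)
    done
  have mu0: "mu0 = s^4 / p" using s4 par by (simp add: field_simps)
  show "((\<lambda>z. Ham m q t1 t2 t3 p e th (vec2 0 s) 0 z 0) has_derivative (\<lambda>v. - (0 \<bullet> v))) (at (vec2 s 0))"
    unfolding Ham_def power2_norm_eq_inner Uz z0_def[symmetric] sg
    apply (rule has_derivative_eq_rhs)
     apply (rule inv_norm_deriv[OF z0nz] derivative_eq_intros lin_mv has_derivative_ident has_derivative_const refl)+
    apply (rule ext)
    using spos par apply (simp add: inner2 Jm_def nz0 mu0 z0_def)
    apply (simp add: nz0[unfolded z0_def] field_simps power2_eq_square power3_eq_cube power4_eq_xxxx)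
    done
qed



lemma cmul_norm: "norm (mat2 a (-b) b a *v z) = sqrt (a^2 + b^2) * norm (z::real^2)"
proof -
  have "(a * z$1 + - b * z$2)^2 + (b * z$1 + a * z$2)^2 = (a^2 + b^2) * ((z$1)^2 + (z$2)^2)"
    by (simp add: algebra_simps power2_eq_square)
  then show ?thesis by (simp add: norm2 real_sqrt_mult)
qed

lemma Adiff: "Amat m t1 t2 t3 i - Amat m t1 t2 t3 j = mat2 (avec m t1 t2 t3 i $ 1 - avec m t1 t2 t3 j $ 1)
   (- (avec m t1 t2 t3 i $ 2 - avec m t1 t2 t3 j $ 2)) (avec m t1 t2 t3 i $ 2 - avec m t1 t2 t3 j $ 2) (avec m t1 t2 t3 i $ 1 - avec m t1 t2 t3 j $ 1)"
  by (simp add: Amat_mat2 mat2_diff)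

lemma Bdiff: "Bmat m t1 t2 t3 i - Bmat m t1 t2 t3 j = mat2 (bX m t1 t2 t3 i - bX m t1 t2 t3 j)
   (- (bY m t1 t2 t3 i - bY m t1 t2 t3 j)) (bY m t1 t2 t3 i - bY m t1 t2 t3 j) (bX m t1 t2 t3 i - bX m t1 t2 t3 j)"
  by (simp add: Bmat_mat2 mat2_diff)

lemma norm_avec_diff: "norm (avec m t1 t2 t3 i - avec m t1 t2 t3 j) =
   sqrt ((avec m t1 t2 t3 i $ 1 - avec m t1 t2 t3 j $ 1)^2 + (avec m t1 t2 t3 i $ 2 - avec m t1 t2 t3 j $ 2)^2)"
  by (simp add: norm2)

lemma Uz_lemma: "Upot m q t1 t2 t3 z 0 = mu m q t1 t2 t3 / norm z"
proof -
  have n: "norm ((Amat m t1 t2 t3 i - Amat m t1 t2 t3 j) *v z + (Bmat m t1 t2 t3 i - Bmat m t1 t2 t3 j) *v 0)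
     = norm (avec m t1 t2 t3 i - avec m t1 t2 t3 j) * norm z" for i j
  proof -
    have B0: "(Bmat m t1 t2 t3 i - Bmat m t1 t2 t3 j) *v 0 = 0" by simp
    show ?thesis unfolding B0 Adiff norm_avec_diff add_0_right cmul_norm by (rule refl)
  qed
  show ?thesis unfolding Upot_def mu_def n by (simp add: add_divide_distrib)
qed




lemma pair_term:
  fixes v :: "real^2"
  assumes spos: "s > 0" and npos: "norm (avec m t1 t2 t3 i - avec m t1 t2 t3 j) > 0"
    and cd: "c = kap * m i * m j * (norm (avec m t1 t2 t3 i - avec m t1 t2 t3 j))^3"
  defines "dx \<equiv> avec m t1 t2 t3 i $ 1 - avec m t1 t2 t3 j $ 1"
    and "dy \<equiv> avec m t1 t2 t3 i $ 2 - avec m t1 t2 t3 j $ 2"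
    and "ex \<equiv> bX m t1 t2 t3 i - bX m t1 t2 t3 j" and "ey \<equiv> bY m t1 t2 t3 i - bY m t1 t2 t3 j"
  shows "- c * (((Amat m t1 t2 t3 i - Amat m t1 t2 t3 j) *v vec2 s 0) \<bullet> ((Bmat m t1 t2 t3 i - Bmat m t1 t2 t3 j) *v v))
      / (norm ((Amat m t1 t2 t3 i - Amat m t1 t2 t3 j) *v vec2 s 0))^3
    = - kap / s^2 * (m i * m j * (dx * ex + dy * ey) * v$1 + m i * m j * (dy * ex - dx * ey) * v$2)"
proof -
  define n where "n = norm (avec m t1 t2 t3 i - avec m t1 t2 t3 j)"
  have nd: "n = sqrt (dx^2 + dy^2)" unfolding n_def dx_def dy_def by (simp add: norm2)
  have nn: "norm ((Amat m t1 t2 t3 i - Amat m t1 t2 t3 j) *v vec2 s 0) = s * n"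
  proof -
    have "norm (vec2 s 0) = s" using spos by (simp add: norm2)
    then show ?thesis unfolding Adiff cmul_norm nd dx_def dy_def by simp
  qed
  have ip: "((Amat m t1 t2 t3 i - Amat m t1 t2 t3 j) *v vec2 s 0) \<bullet> ((Bmat m t1 t2 t3 i - Bmat m t1 t2 t3 j) *v v)
     = s * ((dx * ex + dy * ey) * v$1 + (dy * ex - dx * ey) * v$2)"
    unfolding Adiff Bdiff dx_def[symmetric] dy_def[symmetric] ex_def[symmetric] ey_def[symmetric]
    by (simp add: inner2 algebra_simps)
  have n0: "n > 0" using npos unfolding n_def .
  show ?thesis unfolding ip nn cd n_def[symmetric] using spos n0
    by (simp add: field_simps power2_eq_square power3_eq_cube)
qed

lemma Uw_lemma:
  fixes m q :: "nat \<Rightarrow> real" and s kap :: real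
  assumes spos: "s > 0"
    and npos: "norm (avec m t1 t2 t3 1 - avec m t1 t2 t3 2) > 0" "norm (avec m t1 t2 t3 1 - avec m t1 t2 t3 3) > 0"
       "norm (avec m t1 t2 t3 2 - avec m t1 t2 t3 3) > 0"
    and cd: "m 1 * m 2 * delta m q 1 2 = kap * m 1 * m 2 * (norm (avec m t1 t2 t3 1 - avec m t1 t2 t3 2))^3"
       "m 1 * m 3 * delta m q 1 3 = kap * m 1 * m 3 * (norm (avec m t1 t2 t3 1 - avec m t1 t2 t3 3))^3"
       "m 2 * m 3 * delta m q 2 3 = kap * m 2 * m 3 * (norm (avec m t1 t2 t3 2 - avec m t1 t2 t3 3))^3"
  defines "ax \<equiv> \<lambda>i. avec m t1 t2 t3 i $ 1" and "ay \<equiv> \<lambda>i. avec m t1 t2 t3 i $ 2"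
    and "bx \<equiv> bX m t1 t2 t3" and "by \<equiv> bY m t1 t2 t3"
  assumes ms: "m 1 + m 2 + m 3 = 1"
    and I: "m 1*ax 1+m 2*ax 2+m 3*ax 3 = 0" "m 1*ay 1+m 2*ay 2+m 3*ay 3 = 0"
    "m 1*bx 1+m 2*bx 2+m 3*bx 3 = 0" "m 1*by 1+m 2*by 2+m 3*by 3 = 0"
    "m 1*(ax 1*bx 1+ay 1*by 1)+m 2*(ax 2*bx 2+ay 2*by 2)+m 3*(ax 3*bx 3+ay 3*by 3) = 0"
    "m 1*(ax 1*by 1-ay 1*bx 1)+m 2*(ax 2*by 2-ay 2*bx 2)+m 3*(ax 3*by 3-ay 3*bx 3) = 0"
  shows "((\<lambda>w. Upot m q t1 t2 t3 (vec2 s 0) w) has_derivative (\<lambda>v. 0)) (at 0)"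
proof -
  define d where "d i j = (Amat m t1 t2 t3 i - Amat m t1 t2 t3 j) *v vec2 s 0" for i j
  define E where "E i j = Bmat m t1 t2 t3 i - Bmat m t1 t2 t3 j" for i j
  define c where "c i j = m i * m j * delta m q i j" for i j
  have U: "(\<lambda>w. Upot m q t1 t2 t3 (vec2 s 0) w) = (\<lambda>w. c 1 2 / norm (d 1 2 + E 1 2 *v w)
       + c 1 3 / norm (d 1 3 + E 1 3 *v w) + c 2 3 / norm (d 2 3 + E 2 3 *v w))"
    unfolding Upot_def d_def E_def c_def by (simp add: add.assoc)
  have dnz: "d i j + E i j *v 0 \<noteq> 0" if "norm (avec m t1 t2 t3 i - avec m t1 t2 t3 j) > 0" for i j
  proof -
    have "norm (vec2 s 0) = s" using spos by (simp add: norm2)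
    then have "norm (d i j) = s * norm (avec m t1 t2 t3 i - avec m t1 t2 t3 j)"
      unfolding d_def Adiff cmul_norm by (simp add: norm2)
    then have "norm (d i j) > 0" using spos that by simp
    then show ?thesis by auto
  qed
  have D: "((\<lambda>w. Upot m q t1 t2 t3 (vec2 s 0) w) has_derivative
     (\<lambda>v. - c 1 2 * (d 1 2 \<bullet> (E 1 2 *v v)) / (norm (d 1 2))^3
          + - c 1 3 * (d 1 3 \<bullet> (E 1 3 *v v)) / (norm (d 1 3))^3
          + - c 2 3 * (d 2 3 \<bullet> (E 2 3 *v v)) / (norm (d 2 3))^3)) (at 0)"
    unfolding U
    using has_derivative_add[OF has_derivative_add[OF term_deriv[OF dnz[OF npos(1)]] term_deriv[OF dnz[OF npos(2)]]]
       term_deriv[OF dnz[OF npos(3)]]] by simp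
  have Z: "- c 1 2 * (d 1 2 \<bullet> (E 1 2 *v v)) / (norm (d 1 2))^3
          + - c 1 3 * (d 1 3 \<bullet> (E 1 3 *v v)) / (norm (d 1 3))^3
          + - c 2 3 * (d 2 3 \<bullet> (E 2 3 *v v)) / (norm (d 2 3))^3 = 0" for v
  proof -
    note P = pair_term[OF spos npos(1) cd(1), of v]
       pair_term[OF spos npos(2) cd(2), of v]
       pair_term[OF spos npos(3) cd(3), of v]
    have S1: "m 1 * m 2 * ((ax 1 - ax 2) * (bx 1 - bx 2) + (ay 1 - ay 2) * (by 1 - by 2))
      + m 1 * m 3 * ((ax 1 - ax 3) * (bx 1 - bx 3) + (ay 1 - ay 3) * (by 1 - by 3))
      + m 2 * m 3 * ((ax 2 - ax 3) * (bx 2 - bx 3) + (ay 2 - ay 3) * (by 2 - by 3)) = 0"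
    proof -
      note a = pair_id[of "m 1" "m 2" "ax 1" "ax 2" "bx 1" "bx 2" "m 3" "ax 3" "bx 3"]
      note b = pair_id[of "m 1" "m 2" "ay 1" "ay 2" "by 1" "by 2" "m 3" "ay 3" "by 3"]
      have "m 1 * m 2 * ((ax 1 - ax 2) * (bx 1 - bx 2) + (ay 1 - ay 2) * (by 1 - by 2))
      + m 1 * m 3 * ((ax 1 - ax 3) * (bx 1 - bx 3) + (ay 1 - ay 3) * (by 1 - by 3))
      + m 2 * m 3 * ((ax 2 - ax 3) * (bx 2 - bx 3) + (ay 2 - ay 3) * (by 2 - by 3)) =
        (m 1 * m 2 * ((ax 1 - ax 2) * (bx 1 - bx 2)) + m 1 * m 3 * ((ax 1 - ax 3) * (bx 1 - bx 3)) + m 2 * m 3 * ((ax 2 - ax 3) * (bx 2 - bx 3)))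
      + (m 1 * m 2 * ((ay 1 - ay 2) * (by 1 - by 2)) + m 1 * m 3 * ((ay 1 - ay 3) * (by 1 - by 3)) + m 2 * m 3 * ((ay 2 - ay 3) * (by 2 - by 3)))"
        by (simp add: algebra_simps)
      also have "\<dots> = (m 1*(ax 1*bx 1+ay 1*by 1)+m 2*(ax 2*bx 2+ay 2*by 2)+m 3*(ax 3*bx 3+ay 3*by 3))"
        unfolding a b ms I(1-4) by (simp add: algebra_simps)
      finally show ?thesis using I(5) I(6) by linarith
    qed
    have S2: "m 1 * m 2 * ((ay 1 - ay 2) * (bx 1 - bx 2) - (ax 1 - ax 2) * (by 1 - by 2))
      + m 1 * m 3 * ((ay 1 - ay 3) * (bx 1 - bx 3) - (ax 1 - ax 3) * (by 1 - by 3))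
      + m 2 * m 3 * ((ay 2 - ay 3) * (bx 2 - bx 3) - (ax 2 - ax 3) * (by 2 - by 3)) = 0"
    proof -
      note a = pair_id[of "m 1" "m 2" "ay 1" "ay 2" "bx 1" "bx 2" "m 3" "ay 3" "bx 3"]
      note b = pair_id[of "m 1" "m 2" "ax 1" "ax 2" "by 1" "by 2" "m 3" "ax 3" "by 3"]
      have "m 1 * m 2 * ((ay 1 - ay 2) * (bx 1 - bx 2) - (ax 1 - ax 2) * (by 1 - by 2))
      + m 1 * m 3 * ((ay 1 - ay 3) * (bx 1 - bx 3) - (ax 1 - ax 3) * (by 1 - by 3))
      + m 2 * m 3 * ((ay 2 - ay 3) * (bx 2 - bx 3) - (ax 2 - ax 3) * (by 2 - by 3)) =
        (m 1 * m 2 * ((ay 1 - ay 2) * (bx 1 - bx 2)) + m 1 * m 3 * ((ay 1 - ay 3) * (bx 1 - bx 3)) + m 2 * m 3 * ((ay 2 - ay 3) * (bx 2 - bx 3)))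
      - (m 1 * m 2 * ((ax 1 - ax 2) * (by 1 - by 2)) + m 1 * m 3 * ((ax 1 - ax 3) * (by 1 - by 3)) + m 2 * m 3 * ((ax 2 - ax 3) * (by 2 - by 3)))"
        by (simp add: algebra_simps)
      also have "\<dots> = - (m 1*(ax 1*by 1-ay 1*bx 1)+m 2*(ax 2*by 2-ay 2*bx 2)+m 3*(ax 3*by 3-ay 3*bx 3))"
        unfolding a b ms I(1-4) by (simp add: algebra_simps)
      finally show ?thesis using I(5) I(6) by linarith
    qed
    have "- c 1 2 * (d 1 2 \<bullet> (E 1 2 *v v)) / (norm (d 1 2))^3
          + - c 1 3 * (d 1 3 \<bullet> (E 1 3 *v v)) / (norm (d 1 3))^3
          + - c 2 3 * (d 2 3 \<bullet> (E 2 3 *v v)) / (norm (d 2 3))^3 =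
        - kap / s^2 * (v$1 * (m 1 * m 2 * ((ax 1 - ax 2) * (bx 1 - bx 2) + (ay 1 - ay 2) * (by 1 - by 2))
      + m 1 * m 3 * ((ax 1 - ax 3) * (bx 1 - bx 3) + (ay 1 - ay 3) * (by 1 - by 3))
      + m 2 * m 3 * ((ax 2 - ax 3) * (bx 2 - bx 3) + (ay 2 - ay 3) * (by 2 - by 3)))
      + v$2 * (m 1 * m 2 * ((ay 1 - ay 2) * (bx 1 - bx 2) - (ax 1 - ax 2) * (by 1 - by 2))
      + m 1 * m 3 * ((ay 1 - ay 3) * (bx 1 - bx 3) - (ax 1 - ax 3) * (by 1 - by 3))
      + m 2 * m 3 * ((ay 2 - ay 3) * (bx 2 - bx 3) - (ax 2 - ax 3) * (by 2 - by 3))))"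
      unfolding c_def d_def E_def P ax_def ay_def bx_def by_def by (simp add: algebra_simps)
    then show ?thesis unfolding S1 S2 by simp
  qed
  show ?thesis using D unfolding Z .
qed

theorem proposition3p2:
  fixes m q :: "nat \<Rightarrow> real"
    and t1 t2 t3 e p :: real
    and r r' ang :: "real \<Rightarrow> real"
    and zK zK' :: "real \<Rightarrow> real^2"
  assumes m_pos: "m 1 > 0" "m 2 > 0" "m 3 > 0"
    and m_sum: "m 1 + m 2 + m 3 = 1"
    and delta_pos: "delta m q 1 2 > 0" "delta m q 2 3 > 0" "delta m q 3 1 > 0"
    and tri: "root 3 (delta m q 1 2) + root 3 (delta m q 2 3) > root 3 (delta m q 3 1)"
             "root 3 (delta m q 2 3) + root 3 (delta m q 3 1) > root 3 (delta m q 1 2)"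
             "root 3 (delta m q 3 1) + root 3 (delta m q 1 2) > root 3 (delta m q 2 3)"
    and angles: "t1 > 0" "t2 > 0" "t3 > 0" "t1 + t2 + t3 = pi"
    and sines: "sin t1 * root 3 (delta m q 3 1) = sin t2 * root 3 (delta m q 2 3)"
               "sin t2 * root 3 (delta m q 1 2) = sin t3 * root 3 (delta m q 3 1)"
    and ecc: "0 \<le> e" "e < 1"
    and par: "p > 0"
    and kepler_polar: "\<And>t. zK t = r t *\<^sub>R vec2 (cos (ang t)) (sin (ang t))"
    and kepler_vel: "\<And>t. (zK has_vector_derivative zK' t) (at t)"
    and kepler_acc: "\<And>t. (zK' has_vector_derivative
                        (- (mu m q t1 t2 t3 / (norm (zK t))^3)) *\<^sub>R zK t) (at t)"
    and conic: "\<And>t. r t = p / (1 + e * cos (ang t))"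
    and r_deriv: "\<And>t. (r has_real_derivative r' t) (at t)"
    and anomaly: "continuous_on UNIV ang" "strict_mono ang"
  shows "(\<forall>vth. \<exists>t. ang t = vth) \<and>
    (\<forall>t.
      (\<exists>g z w. \<forall>i\<in>{1,2,3}. calA_act m t1 t2 t3 g z w i = Qtri m t1 t2 t3 r ang i t) \<and>
      (\<forall>g z w. (\<forall>i\<in>{1,2,3}. calA_act m t1 t2 t3 g z w i = Qtri m t1 t2 t3 r ang i t) \<longrightarrow>
        (case calAT_act m t1 t2 t3 (\<lambda>i. Ptri m t1 t2 t3 r ang i t) of (G, Z, W) \<Rightarrow>
          let s = sigma m q t1 t2 t3 p;
              zt = transpose (rot (ang t)) *v z; Zt = transpose (rot (ang t)) *v Z;
              wt = transpose (rot (ang t)) *v w; Wt = transpose (rot (ang t)) *v W;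
              zh = (1 / r t) *\<^sub>R zt; Zh = r t *\<^sub>R Zt - r' t *\<^sub>R zt;
              wh = (1 / r t) *\<^sub>R wt; Wh = r t *\<^sub>R Wt - r' t *\<^sub>R wt
          in G = 0 \<and> g = 0 \<and>
             (1 / s) *\<^sub>R Zh = vec2 0 s \<and> (1 / s) *\<^sub>R Wh = 0 \<and>
             s *\<^sub>R zh = vec2 s 0 \<and> s *\<^sub>R wh = 0))) \<and>
    hamiltonian_solution (Ham m q t1 t2 t3 p e)
      (\<lambda>_. vec2 0 (sigma m q t1 t2 t3 p)) (\<lambda>_. 0) (\<lambda>_. vec2 (sigma m q t1 t2 t3 p) 0) (\<lambda>_. 0)"
proof -
  note C = config[OF m_pos m_sum angles]
  define A where "A = alpha m t1 t2 t3"
  have Apos: "A > 0" using C(1) unfolding A_def .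
  have tl: "t1 < pi" "t2 < pi" "t3 < pi" using angles by linarith+
  have sp: "sin t1 > 0" "sin t2 > 0" "sin t3 > 0" using angles tl by (simp_all add: sin_gt_zero)
  have n12: "norm (avec m t1 t2 t3 1 - avec m t1 t2 t3 2) = sin t3 / A"
  proof -
    have "norm (avec m t1 t2 t3 1 - avec m t1 t2 t3 2) = sqrt ((cos t2 * sin t3 / A)^2 + (sin t2 * sin t3 / A)^2)"
      unfolding norm_avec_diff C(10) C(11) A_def ..
    also have "\<dots> = sqrt ((sin t3 / A)^2 * ((cos t2)^2 + (sin t2)^2))"
      by (rule arg_cong[where f=sqrt]) (simp add: power_divide power_mult_distrib add_divide_distrib algebra_simps del: sin_cos_squared_add sin_cos_squared_add2 sin_cos_squared_add3)
    also have "\<dots> = sqrt ((sin t3 / A)^2)" by simp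
    finally show ?thesis using sp Apos by simp
  qed
  have n13: "norm (avec m t1 t2 t3 1 - avec m t1 t2 t3 3) = sin t2 / A"
  proof -
    have "norm (avec m t1 t2 t3 1 - avec m t1 t2 t3 3) = sqrt ((-(sin t2 * cos t3) / A)^2 + (sin t2 * sin t3 / A)^2)"
      unfolding norm_avec_diff C(12) C(13) A_def ..
    also have "\<dots> = sqrt ((sin t2 / A)^2 * ((cos t3)^2 + (sin t3)^2))"
      by (rule arg_cong[where f=sqrt]) (simp add: power_divide power_mult_distrib add_divide_distrib algebra_simps del: sin_cos_squared_add sin_cos_squared_add2 sin_cos_squared_add3)
    also have "\<dots> = sqrt ((sin t2 / A)^2)" by simp
    finally show ?thesis using sp Apos by simp
  qed
  have n23: "norm (avec m t1 t2 t3 2 - avec m t1 t2 t3 3) = sin t1 / A"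
  proof -
    have "norm (avec m t1 t2 t3 2 - avec m t1 t2 t3 3) = sqrt ((-sin t1 / A)^2 + 0^2)"
      unfolding norm_avec_diff C(14) C(15) A_def ..
    also have "\<dots> = sqrt ((sin t1 / A)^2)" by (simp add: power_divide)
    finally show ?thesis using sp Apos by simp
  qed
  define k where "k = root 3 (delta m q 2 3) / sin t1"
  have r23: "root 3 (delta m q 2 3) = k * sin t1" unfolding k_def using sp by simp
  have r31: "root 3 (delta m q 3 1) = k * sin t2"
    using sines(1) sp unfolding k_def by (simp add: field_simps)
  have r12: "root 3 (delta m q 1 2) = k * sin t3"
    using sines(2) sp r31 by (simp add: field_simps)
  have d13: "delta m q 1 3 = delta m q 3 1" unfolding delta_def by (simp add: mult.commute)
  have dd1: "delta m q 1 2 = (k * sin t3)^3"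
  proof -
    have "(root 3 (delta m q 1 2))^3 = delta m q 1 2" using delta_pos(1) by simp
    then show ?thesis using r12 by simp
  qed
  have dd2: "delta m q 1 3 = (k * sin t2)^3"
  proof -
    have "(root 3 (delta m q 3 1))^3 = delta m q 3 1" using delta_pos(3) by simp
    then show ?thesis using r31 d13 by simp
  qed
  have dd3: "delta m q 2 3 = (k * sin t1)^3"
  proof -
    have "(root 3 (delta m q 2 3))^3 = delta m q 2 3" using delta_pos(2) by simp
    then show ?thesis using r23 by simp
  qed
  note dd = dd1 dd2 dd3
  define kap where "kap = (k * A)^3"
  have cd: "m 1 * m 2 * delta m q 1 2 = kap * m 1 * m 2 * (norm (avec m t1 t2 t3 1 - avec m t1 t2 t3 2))^3"
    "m 1 * m 3 * delta m q 1 3 = kap * m 1 * m 3 * (norm (avec m t1 t2 t3 1 - avec m t1 t2 t3 3))^3"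
    "m 2 * m 3 * delta m q 2 3 = kap * m 2 * m 3 * (norm (avec m t1 t2 t3 2 - avec m t1 t2 t3 3))^3"
    unfolding n12 n13 n23 dd kap_def using Apos by (simp_all add: power_divide power_mult_distrib field_simps)
  have npos: "norm (avec m t1 t2 t3 1 - avec m t1 t2 t3 2) > 0" "norm (avec m t1 t2 t3 1 - avec m t1 t2 t3 3) > 0"
       "norm (avec m t1 t2 t3 2 - avec m t1 t2 t3 3) > 0"
    unfolding n12 n13 n23 using sp Apos by simp_all
  define mu0 where "mu0 = mu m q t1 t2 t3"
  have d13pos: "delta m q 1 3 > 0" using d13 delta_pos by simp
  have mupos: "mu0 > 0"
  proof -
    have "mu0 = m 1 * m 2 * delta m q 1 2 / norm (avec m t1 t2 t3 1 - avec m t1 t2 t3 2)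
      + m 1 * m 3 * delta m q 1 3 / norm (avec m t1 t2 t3 1 - avec m t1 t2 t3 3)
      + m 2 * m 3 * delta m q 2 3 / norm (avec m t1 t2 t3 2 - avec m t1 t2 t3 3)"
      unfolding mu0_def mu_def by (simp add: add.assoc)
    also have "\<dots> > 0" using npos m_pos delta_pos d13pos by (intro add_pos_pos divide_pos_pos mult_pos_pos) auto
    finally show ?thesis .
  qed
  define s where "s = sigma m q t1 t2 t3 p"
  have mp0: "mu0 * p > 0" using mupos par by simp
  have spos: "s > 0" unfolding s_def sigma_def mu0_def[symmetric] using mp0 mupos par by simp
  have s4: "mu0 * p = s^4"
  proof -
    have "s^4 = s powr (real 4)" using spos by (simp add: powr_realpow)
    also have "\<dots> = mu0 * p" unfolding s_def sigma_def mu0_def[symmetric] powr_powr using mp0 by simp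
    finally show ?thesis by simp
  qed
  have s2: "sqrt (mu0 * p) = s^2"
    unfolding s4 using spos by (simp add: real_sqrt_unique power_mult[symmetric])
  note KC = kepler_core[OF mupos par ecc kepler_polar kepler_vel kepler_acc[unfolded mu0_def[symmetric]] conic r_deriv]
  have rpos: "\<And>t. r t > 0" using KC(1) .
  have rmax: "r t \<le> p / (1 - e)" for t
  proof -
    have "e * cos (ang t) \<ge> e * (-1)" using ecc by (intro mult_left_mono) auto
    then have "1 + e * cos (ang t) \<ge> 1 - e" by simp
    then show ?thesis unfolding conic[of t] using ecc par by (intro divide_left_mono) auto
  qed
  note AF = angle_facts[OF kepler_polar kepler_vel r_deriv rpos rmax KC(3) mp0 anomaly]
  have cval: "zK t $1 * zK' t $2 - zK t $2 * zK' t $1 = s^2" for t using AF(1)[of t] s2 by simp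
  have surj: "\<forall>vth. \<exists>t. ang t = vth" using AF(2) by blast
  have Uw: "((\<lambda>w. Upot m q t1 t2 t3 (vec2 s 0) w) has_derivative (\<lambda>v. 0)) (at 0)"
    by (rule Uw_lemma[OF spos npos cd m_sum C(2) C(3) C(5) C(6) C(8) C(9)])
  have ham: "hamiltonian_solution (Ham m q t1 t2 t3 p e)
      (\<lambda>_. vec2 0 (sigma m q t1 t2 t3 p)) (\<lambda>_. 0) (\<lambda>_. vec2 (sigma m q t1 t2 t3 p) 0) (\<lambda>_. 0)"
  proof -
    have Uz: "\<And>z. Upot m q t1 t2 t3 z 0 = mu0 / norm z" unfolding mu0_def by (rule Uz_lemma)
    show ?thesis using ham_solution[OF spos s4 par s_def[symmetric] Uz Uw] unfolding s_def .
  qed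
  have Qeq: "Qtri m t1 t2 t3 r ang i t = Amat m t1 t2 t3 i *v zK t" for i t
    unfolding Qtri_def Amat_mat2 kepler_polar rot_def by (simp add: vec2_eq_iff algebra_simps)
  have Qd: "(Qtri m t1 t2 t3 r ang i has_vector_derivative (Amat m t1 t2 t3 i *v zK' t)) (at t)" for i t
  proof -
    have "Qtri m t1 t2 t3 r ang i = (\<lambda>t. Amat m t1 t2 t3 i *v zK t)" using Qeq by auto
    then show ?thesis
      using bounded_linear.has_vector_derivative[OF matrix_vector_mul_bounded_linear kepler_vel] by simp
  qed
  have Peq: "Ptri m t1 t2 t3 r ang i t = m i *\<^sub>R (Amat m t1 t2 t3 i *v zK' t)" for i t
    unfolding Ptri_def using vector_derivative_at[OF Qd] by simp
  have CT: "calAT_act m t1 t2 t3 (\<lambda>i. Ptri m t1 t2 t3 r ang i t) = (0, zK' t, 0)" for t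
  proof -
    have G: "(\<Sum>i\<in>{1,2,3}. Ptri m t1 t2 t3 r ang i t) = 0"
      unfolding Peq using C(2) C(3) by (simp add: vec2_eq_iff Amat_mat2; algebra)
    have Z: "(\<Sum>i\<in>{1,2,3}. transpose (Amat m t1 t2 t3 i) *v Ptri m t1 t2 t3 r ang i t) = zK' t"
      unfolding Peq using C(4) by (simp add: vec2_eq_iff Amat_mat2; algebra)
    have W: "(\<Sum>i\<in>{1,2,3}. transpose (Bmat m t1 t2 t3 i) *v Ptri m t1 t2 t3 r ang i t) = 0"
      unfolding Peq using C(8) C(9) by (simp add: vec2_eq_iff Amat_mat2 Bmat_mat2; algebra)
    show ?thesis unfolding calAT_act_def G Z W ..
  qed
  show ?thesis
    apply (intro conjI allI impI)
    subgoal using surj by blast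
    subgoal for t
      by (rule exI[of _ 0], rule exI[of _ "zK t"], rule exI[of _ 0]) (simp add: calA_act_def Qeq)
    subgoal premises H for t g z w
    proof -
      have E: "calA_act m t1 t2 t3 g z w i = Amat m t1 t2 t3 i *v zK t" if "i \<in> {1,2,3}" for i
        using H that Qeq by auto
      have E1: "g$1 + (avec m t1 t2 t3 1 $ 1 * z$1 - avec m t1 t2 t3 1 $ 2 * z$2) + (bX m t1 t2 t3 1 * w$1 - bY m t1 t2 t3 1 * w$2)
          = avec m t1 t2 t3 1 $ 1 * zK t$1 - avec m t1 t2 t3 1 $ 2 * zK t$2"
        "g$2 + (avec m t1 t2 t3 1 $ 2 * z$1 + avec m t1 t2 t3 1 $ 1 * z$2) + (bY m t1 t2 t3 1 * w$1 + bX m t1 t2 t3 1 * w$2)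
          = avec m t1 t2 t3 1 $ 2 * zK t$1 + avec m t1 t2 t3 1 $ 1 * zK t$2"
        using E[of 1] by (simp_all add: vec2_eq_iff calA_act_def Amat_mat2 Bmat_mat2 algebra_simps)
      have E2: "g$1 + (avec m t1 t2 t3 2 $ 1 * z$1 - avec m t1 t2 t3 2 $ 2 * z$2) + (bX m t1 t2 t3 2 * w$1 - bY m t1 t2 t3 2 * w$2)
          = avec m t1 t2 t3 2 $ 1 * zK t$1 - avec m t1 t2 t3 2 $ 2 * zK t$2"
        "g$2 + (avec m t1 t2 t3 2 $ 2 * z$1 + avec m t1 t2 t3 2 $ 1 * z$2) + (bY m t1 t2 t3 2 * w$1 + bX m t1 t2 t3 2 * w$2)
          = avec m t1 t2 t3 2 $ 2 * zK t$1 + avec m t1 t2 t3 2 $ 1 * zK t$2"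
        using E[of 2] by (simp_all add: vec2_eq_iff calA_act_def Amat_mat2 Bmat_mat2 algebra_simps)
      have E3: "g$1 + (avec m t1 t2 t3 3 $ 1 * z$1 - avec m t1 t2 t3 3 $ 2 * z$2) + (bX m t1 t2 t3 3 * w$1 - bY m t1 t2 t3 3 * w$2)
          = avec m t1 t2 t3 3 $ 1 * zK t$1 - avec m t1 t2 t3 3 $ 2 * zK t$2"
        "g$2 + (avec m t1 t2 t3 3 $ 2 * z$1 + avec m t1 t2 t3 3 $ 1 * z$2) + (bY m t1 t2 t3 3 * w$1 + bX m t1 t2 t3 3 * w$2)
          = avec m t1 t2 t3 3 $ 2 * zK t$1 + avec m t1 t2 t3 3 $ 1 * zK t$2"
        using E[of 3] by (simp_all add: vec2_eq_iff calA_act_def Amat_mat2 Bmat_mat2 algebra_simps)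
      note LU = lin_unique[OF m_sum C(2) C(3) C(4) C(5) C(6) C(7) C(8) C(9) E1 E2 E3]
      have g0: "g = 0" using LU(1,2) by (simp add: vec2_eq_iff)
      have zz: "z = zK t" using LU(3,4) by (simp add: vec2_eq_iff)
      have w0: "w = 0" using LU(5,6) by (simp add: vec2_eq_iff)
      have F1: "r t * r' t = r t * cos (ang t) * zK' t $1 + r t * sin (ang t) * zK' t $2"
        using KC(2)[of t] by (simp add: kepler_polar)
      have F2: "r t * cos (ang t) * zK' t $2 - r t * sin (ang t) * zK' t $1 = s^2"
        using cval[of t] by (simp add: kepler_polar)
      have rt: "r t > 0" by (rule rpos)
      have F1': "cos (ang t) * zK' t $ 1 + sin (ang t) * zK' t $ 2 = r' t"
      proof -
        have "r t * (cos (ang t) * zK' t $ 1 + sin (ang t) * zK' t $ 2) = r t * r' t"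
          using F1 by (simp add: algebra_simps)
        then show ?thesis using rt by simp
      qed
      have T: "cos (ang t) * (r t * cos (ang t)) + sin (ang t) * (r t * sin (ang t)) = r t"
      proof -
        have "cos (ang t) * (r t * cos (ang t)) + sin (ang t) * (r t * sin (ang t)) = r t * ((cos (ang t))^2 + (sin (ang t))^2)"
          by (simp add: power2_eq_square algebra_simps del: sin_cos_squared_add sin_cos_squared_add2 sin_cos_squared_add3)
        then show ?thesis by simp
      qed
      show ?thesis unfolding CT g0 zz w0 s_def[symmetric]
        apply (simp add: Let_def vec2_eq_iff rot_def kepler_polar T)
        using F1' F2 rt spos by (auto simp: field_simps power2_eq_square)
    qed
    subgoal by (rule ham)
    done
qed

end
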